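(* Let $\mathcal{S}$ be a finite elation generalized quadrangle of order $(s,t)$ with elation group $G$ and associated $4$-gonal family $(G,\{A_i\}_{i=0}^t,\{A_i^*\}_{i=0}^t)$. In $\mathbb{R}[G]$ put $S:=\sum_{i=0}^t(sA_i+A_i^* )$ and $T:=\sum_{i=0}^t(tA_i-A_i^* )$. Let $\chi$ be a nonlinear irreducible complex character of $G$, extended linearly to $\mathbb{R}[G]$. Then \[\chi(S)=s(s+t)\,\omega_\chi,\qquad \chi(T)=\frac{(s+t)st}{\gcd(s,t)}\,z_\chi\] for some nonnegative integers $\omega_\chi, z_\chi$.
   Context: A generalized quadrangle of order $(s,t)$: each line has $s+1$ points, each point is on $t+1$ lines, and for each non-incident point-line pair $(P,\ell)$ there is a unique point on $\ell$ collinear with $P$. An elation about $P$ is an automorphism that is the identity or fixes each line through $P$ and no point not collinear with $P$. $\mathcal{S}$ is an elation generalized quadrangle with base point $P$ and elation group $G$ if $G$ consists of elations about $P$ and acts regularly on the points not collinear with $P$. The associated $4$-gonal family: fix a point $y$ not collinear with $P$, let $M_0,\dots,M_t$ be the lines through $y$, let $z_i$ be the unique point of $M_i$ collinear with $P$, and let $A_i$, $A_i^*$ be the stabilizers in $G$ of $M_i$ and $z_i$ respectively. In $\mathbb{R}[G]$ a subset is identified with the sum of its elements. *)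

theory Defs
  imports "HOL-Algebra.Group" "Jordan_Normal_Form.Matrix"
begin

definition collinear :: "'l set \<Rightarrow> ('p \<Rightarrow> 'l \<Rightarrow> bool) \<Rightarrow> 'p \<Rightarrow> 'p \<Rightarrow> bool" where
  "collinear Lns inc x y \<longleftrightarrow> (\<exists>l\<in>Lns. inc x l \<and> inc y l)"

definition is_GQ :: "'p set \<Rightarrow> 'l set \<Rightarrow> ('p \<Rightarrow> 'l \<Rightarrow> bool) \<Rightarrow> nat \<Rightarrow> nat \<Rightarrow> bool" where
  "is_GQ Pts Lns inc s t \<longleftrightarrow>
     finite Pts \<and> finite Lns \<and> s \<ge> 1 \<and> t \<ge> 1 \<and>
     (\<forall>x l. inc x l \<longrightarrow> x \<in> Pts \<and> l \<in> Lns) \<and>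
     (\<forall>l\<in>Lns. card {x\<in>Pts. inc x l} = s + 1) \<and>
     (\<forall>x\<in>Pts. card {l\<in>Lns. inc x l} = t + 1) \<and>
     (\<forall>x\<in>Pts. \<forall>y\<in>Pts. \<forall>l\<in>Lns. \<forall>m\<in>Lns.
        x \<noteq> y \<and> inc x l \<and> inc y l \<and> inc x m \<and> inc y m \<longrightarrow> l = m) \<and>
     (\<forall>x\<in>Pts. \<forall>l\<in>Lns. \<not> inc x l \<longrightarrow>
        (\<exists>!z. z \<in> Pts \<and> inc z l \<and> collinear Lns inc x z))"

definition is_aut_action ::
  "('g, 'm) monoid_scheme \<Rightarrow> 'p set \<Rightarrow> 'l set \<Rightarrow> ('p \<Rightarrow> 'l \<Rightarrow> bool)
   \<Rightarrow> ('g \<Rightarrow> 'p \<Rightarrow> 'p) \<Rightarrow> ('g \<Rightarrow> 'l \<Rightarrow> 'l) \<Rightarrow> bool" where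
  "is_aut_action G Pts Lns inc ap al \<longleftrightarrow>
     (\<forall>g\<in>carrier G. bij_betw (ap g) Pts Pts \<and> bij_betw (al g) Lns Lns \<and>
        (\<forall>x\<in>Pts. \<forall>l\<in>Lns. inc x l \<longleftrightarrow> inc (ap g x) (al g l))) \<and>
     (\<forall>g\<in>carrier G. \<forall>h\<in>carrier G.
        (\<forall>x\<in>Pts. ap (g \<otimes>\<^bsub>G\<^esub> h) x = ap g (ap h x)) \<and>
        (\<forall>l\<in>Lns. al (g \<otimes>\<^bsub>G\<^esub> h) l = al g (al h l))) \<and>
     (\<forall>x\<in>Pts. ap \<one>\<^bsub>G\<^esub> x = x) \<and> (\<forall>l\<in>Lns. al \<one>\<^bsub>G\<^esub> l = l)"

definition is_elation ::
  "'p set \<Rightarrow> 'l set \<Rightarrow> ('p \<Rightarrow> 'l \<Rightarrow> bool) \<Rightarrow> 'p \<Rightarrow> ('p \<Rightarrow> 'p) \<Rightarrow> ('l \<Rightarrow> 'l) \<Rightarrow> bool" where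
  "is_elation Pts Lns inc P f g \<longleftrightarrow>
     ((\<forall>x\<in>Pts. f x = x) \<and> (\<forall>l\<in>Lns. g l = l)) \<or>
     ((\<forall>l\<in>Lns. inc P l \<longrightarrow> g l = l) \<and>
      (\<forall>x\<in>Pts. \<not> collinear Lns inc P x \<longrightarrow> f x \<noteq> x))"

definition noncollinear_pts :: "'p set \<Rightarrow> 'l set \<Rightarrow> ('p \<Rightarrow> 'l \<Rightarrow> bool) \<Rightarrow> 'p \<Rightarrow> 'p set" where
  "noncollinear_pts Pts Lns inc P = {x\<in>Pts. \<not> collinear Lns inc P x}"

definition is_EGQ ::
  "'p set \<Rightarrow> 'l set \<Rightarrow> ('p \<Rightarrow> 'l \<Rightarrow> bool) \<Rightarrow> nat \<Rightarrow> nat \<Rightarrow> 'p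
   \<Rightarrow> ('g, 'm) monoid_scheme \<Rightarrow> ('g \<Rightarrow> 'p \<Rightarrow> 'p) \<Rightarrow> ('g \<Rightarrow> 'l \<Rightarrow> 'l) \<Rightarrow> bool" where
  "is_EGQ Pts Lns inc s t P G ap al \<longleftrightarrow>
     is_GQ Pts Lns inc s t \<and> P \<in> Pts \<and> group G \<and>
     is_aut_action G Pts Lns inc ap al \<and>
     (\<forall>g\<in>carrier G. is_elation Pts Lns inc P (ap g) (al g)) \<and>
     (\<forall>x\<in>noncollinear_pts Pts Lns inc P. \<forall>y\<in>noncollinear_pts Pts Lns inc P.
        \<exists>!g. g \<in> carrier G \<and> ap g x = y)"

definition stab_line :: "('g, 'm) monoid_scheme \<Rightarrow> ('g \<Rightarrow> 'l \<Rightarrow> 'l) \<Rightarrow> 'l \<Rightarrow> 'g set" where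
  "stab_line G al M = {g\<in>carrier G. al g M = M}"

definition stab_pt :: "('g, 'm) monoid_scheme \<Rightarrow> ('g \<Rightarrow> 'p \<Rightarrow> 'p) \<Rightarrow> 'p \<Rightarrow> 'g set" where
  "stab_pt G ap z = {g\<in>carrier G. ap g z = z}"

definition proj_pt :: "'p set \<Rightarrow> 'l set \<Rightarrow> ('p \<Rightarrow> 'l \<Rightarrow> bool) \<Rightarrow> 'p \<Rightarrow> 'l \<Rightarrow> 'p" where
  "proj_pt Pts Lns inc P M = (THE z. z \<in> Pts \<and> inc z M \<and> collinear Lns inc P z)"

text \<open>A_M = stabilizer of the line M through y, A_M^* = stabilizer of z_M.\<close>
definition fam_A where "fam_A G al M = stab_line G al M"
definition fam_Astar where
  "fam_Astar Pts Lns inc P G ap M = stab_pt G ap (proj_pt Pts Lns inc P M)"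

text \<open>Elements of R[G] are coefficient functions on carrier G; a subset is the sum of its elements.\<close>
definition set_elem :: "'g set \<Rightarrow> 'g \<Rightarrow> real" where
  "set_elem A = (\<lambda>g. if g \<in> A then 1 else 0)"

definition elem_S where
  "elem_S Pts Lns inc s P G ap al y =
     (\<lambda>g. \<Sum>M\<in>{M\<in>Lns. inc y M}.
        real s * set_elem (fam_A G al M) g + set_elem (fam_Astar Pts Lns inc P G ap M) g)"

definition elem_T where
  "elem_T Pts Lns inc t P G ap al y =
     (\<lambda>g. \<Sum>M\<in>{M\<in>Lns. inc y M}.
        real t * set_elem (fam_A G al M) g - set_elem (fam_Astar Pts Lns inc P G ap M) g)"

definition char_ext :: "('g, 'm) monoid_scheme \<Rightarrow> ('g \<Rightarrow> complex) \<Rightarrow> ('g \<Rightarrow> real) \<Rightarrow> complex" where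
  "char_ext G \<chi> a = (\<Sum>g\<in>carrier G. complex_of_real (a g) * \<chi> g)"

definition is_rep :: "('g, 'm) monoid_scheme \<Rightarrow> nat \<Rightarrow> ('g \<Rightarrow> complex mat) \<Rightarrow> bool" where
  "is_rep G n \<rho> \<longleftrightarrow>
     (\<forall>g\<in>carrier G. \<rho> g \<in> carrier_mat n n) \<and>
     (\<forall>g\<in>carrier G. \<forall>h\<in>carrier G. \<rho> (g \<otimes>\<^bsub>G\<^esub> h) = \<rho> g * \<rho> h) \<and>
     \<rho> \<one>\<^bsub>G\<^esub> = 1\<^sub>m n"

definition invariant_subspace ::
  "('g, 'm) monoid_scheme \<Rightarrow> nat \<Rightarrow> ('g \<Rightarrow> complex mat) \<Rightarrow> complex vec set \<Rightarrow> bool" where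
  "invariant_subspace G n \<rho> W \<longleftrightarrow>
     W \<subseteq> carrier_vec n \<and> 0\<^sub>v n \<in> W \<and>
     (\<forall>v\<in>W. \<forall>w\<in>W. v + w \<in> W) \<and> (\<forall>c. \<forall>v\<in>W. c \<cdot>\<^sub>v v \<in> W) \<and>
     (\<forall>g\<in>carrier G. \<forall>w\<in>W. \<rho> g *\<^sub>v w \<in> W)"

definition irreducible_rep :: "('g, 'm) monoid_scheme \<Rightarrow> nat \<Rightarrow> ('g \<Rightarrow> complex mat) \<Rightarrow> bool" where
  "irreducible_rep G n \<rho> \<longleftrightarrow> n > 0 \<and> is_rep G n \<rho> \<and>
     \<not> (\<exists>W. invariant_subspace G n \<rho> W \<and> W \<noteq> {0\<^sub>v n} \<and> W \<noteq> carrier_vec n)"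

definition mat_trace :: "complex mat \<Rightarrow> complex" where
  "mat_trace A = (\<Sum>i<dim_row A. A $$ (i, i))"

definition irreducible_character :: "('g, 'm) monoid_scheme \<Rightarrow> ('g \<Rightarrow> complex) \<Rightarrow> bool" where
  "irreducible_character G \<chi> \<longleftrightarrow>
     (\<exists>n \<rho>. irreducible_rep G n \<rho> \<and> (\<forall>g\<in>carrier G. \<chi> g = mat_trace (\<rho> g)))"

definition nonlinear_character :: "('g, 'm) monoid_scheme \<Rightarrow> ('g \<Rightarrow> complex) \<Rightarrow> bool" where
  "nonlinear_character G \<chi> \<longleftrightarrow> \<chi> \<one>\<^bsub>G\<^esub> \<noteq> 1"

end

theory Submission
  imports Defs "Jordan_Normal_Form.Schur_Decomposition"
begin

lemma mat_trace_mult_comm: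
  fixes A B :: "complex mat"
  assumes "A \<in> carrier_mat n n" "B \<in> carrier_mat n n"
  shows "mat_trace (A * B) = mat_trace (B * A)"
proof -
  have "mat_trace (A * B) = (\<Sum>i<n. \<Sum>k<n. A $$ (i,k) * B $$ (k,i))"
    using assms unfolding mat_trace_def
    by (auto simp: scalar_prod_def atLeast0LessThan intro!: sum.cong)
  also have "\<dots> = (\<Sum>k<n. \<Sum>i<n. B $$ (k,i) * A $$ (i,k))"
    by (subst sum.swap) (simp add: mult.commute)
  also have "\<dots> = mat_trace (B * A)"
    using assms unfolding mat_trace_def
    by (auto simp: scalar_prod_def atLeast0LessThan intro!: sum.cong)
  finally show ?thesis .
qed

lemma mat_trace_similar:
  fixes A B :: "complex mat"
  assumes A: "A \<in> carrier_mat n n" and sim: "similar_mat_wit A B P Q"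
  shows "mat_trace A = mat_trace B"
proof -
  note w = similar_mat_witD2[OF A sim]
  have "mat_trace A = mat_trace ((P * B) * Q)" using w by simp
  also have "\<dots> = mat_trace (Q * (P * B))"
    by (rule mat_trace_mult_comm[of _ n]) (use w in auto)
  also have "Q * (P * B) = (Q * P) * B" using w by (simp del: assoc_mult_mat add: assoc_mult_mat[of _ n n, symmetric])
  also have "\<dots> = B" using w by simp
  finally show ?thesis .
qed

lemma upper_tri_idem_trace:
  fixes B :: "complex mat"
  assumes B: "B \<in> carrier_mat n n" and ut: "upper_triangular B" and idem: "B * B = B"
  shows "\<exists>k::nat. mat_trace B = of_nat k"
proof -
  have d: "B $$ (i,i) = 0 \<or> B $$ (i,i) = 1" if i: "i < n" for i
  proof -
    have "B $$ (i,i) = (B * B) $$ (i,i)" using idem by simp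
    also have "\<dots> = (\<Sum>k\<in>{0..<n}. B $$ (i,k) * B $$ (k,i))"
      using B i by (simp add: scalar_prod_def)
    also have "\<dots> = (\<Sum>k\<in>{0..<n}. if k = i then B $$ (i,i) * B $$ (i,i) else 0)"
    proof (rule sum.cong)
      fix k assume k: "k \<in> {0..<n}"
      show "B $$ (i,k) * B $$ (k,i) = (if k = i then B $$ (i,i) * B $$ (i,i) else 0)"
      proof (cases "k < i")
        case True then show ?thesis using ut B i unfolding upper_triangular_def by auto
      next
        case False
        then have "k = i \<or> i < k" by auto
        then show ?thesis using ut B k unfolding upper_triangular_def by auto
      qed
    qed simp
    also have "\<dots> = B $$ (i,i) * B $$ (i,i)" using i by simp
    finally have "B $$ (i,i) * (B $$ (i,i) - 1) = 0" by (simp add: algebra_simps)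
    then show ?thesis by auto
  qed
  have "mat_trace B = (\<Sum>i<n. B $$ (i,i))" using B unfolding mat_trace_def by simp
  also have "\<dots> = (\<Sum>i<n. if B $$ (i,i) = 1 then 1 else 0)"
    by (rule sum.cong) (use d in auto)
  also have "\<dots> = of_nat (card {i\<in>{..<n}. B $$ (i,i) = 1})"
    by (simp add: sum.If_cases Int_def conj_commute)
  finally show ?thesis by blast
qed

lemma idem_trace:
  fixes A :: "complex mat"
  assumes A: "A \<in> carrier_mat n n" and idem: "A * A = A"
  shows "\<exists>k::nat. mat_trace A = of_nat k"
proof -
  obtain es where es: "char_poly A = (\<Prod>a\<leftarrow>es. [:- a, 1:])"
    using char_poly_factorized[OF A] by blast
  obtain B where B: "B \<in> carrier_mat n n" "upper_triangular B" "similar_mat A B"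
    using schur_upper_triangular[OF A es] by blast
  obtain P Q where sim: "similar_mat_wit A B P Q" using B(3) unfolding similar_mat_def by blast
  note w = similar_mat_witD2[OF A sim]
  have QP: "Q * (P * M) = M" if "M \<in> carrier_mat n k" for M k
    using w that by (simp del: assoc_mult_mat add: assoc_mult_mat[of Q n n P n M k, symmetric])
  have BQ: "B = Q * A * P"
  proof -
    have "Q * A * P = Q * (P * B * Q) * P" using w by simp
    also have "\<dots> = Q * (P * (B * Q * P))" using w
      by (simp del: assoc_mult_mat add: assoc_mult_mat[of _ n n _ n _ n])
    also have "\<dots> = B * Q * P" using w by (intro QP[of _ n]) auto
    also have "\<dots> = B * (Q * P)" using w by simp
    also have "\<dots> = B" using w by simp
    finally show ?thesis by simp
  qed
  have Pc: "P \<in> carrier_mat n n" and Qc: "Q \<in> carrier_mat n n" and PQ1: "P * Q = 1\<^sub>m n"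
    using w by auto
  have PQ: "P * (Q * M) = M" if "M \<in> carrier_mat n k" for M k
    using Pc Qc PQ1 that by (simp del: assoc_mult_mat add: assoc_mult_mat[of P n n Q n M k, symmetric])
  have c1: "A * P \<in> carrier_mat n n" "Q * (A * P) \<in> carrier_mat n n" using A Pc Qc by auto
  have "B * B = Q * (A * (P * (Q * (A * P))))" using BQ Pc Qc A c1
    by (simp add: assoc_mult_mat[OF Qc c1(1) c1(2)] assoc_mult_mat[OF A Pc c1(2)])
  also have "P * (Q * (A * P)) = A * P" using PQ[of "A * P" n] A Pc by simp
  also have "Q * (A * (A * P)) = Q * (A * A) * P" using Pc Qc A
    by (simp del: assoc_mult_mat add: assoc_mult_mat[of Q n n "A*A" n P n] assoc_mult_mat[of A n n A n P n])
  also have "\<dots> = B" using idem BQ by simp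
  finally have "B * B = B" .
  from upper_tri_idem_trace[OF B(1,2) this] mat_trace_similar[OF A sim] show ?thesis by simp
qed

lemma scaled_idem_trace:
  fixes A :: "complex mat"
  assumes A: "A \<in> carrier_mat n n" and idem: "A * A = c \<cdot>\<^sub>m A" and c: "c \<noteq> 0"
  shows "\<exists>k::nat. mat_trace A = c * of_nat k"
proof -
  let ?E = "(1/c) \<cdot>\<^sub>m A"
  have E: "?E \<in> carrier_mat n n" using A by simp
  have "?E * ?E = (1/c) \<cdot>\<^sub>m ((1/c) \<cdot>\<^sub>m (A * A))"
    using A by (simp add: mult_smult_distrib[of _ n n] mult_smult_assoc_mat[of _ n n])
  also have "\<dots> = ?E" using idem c A by (intro eq_matI) auto
  finally obtain k where k: "mat_trace ?E = of_nat k" using idem_trace[OF E] by blast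
  have "mat_trace ?E = (1/c) * mat_trace A"
    using A unfolding mat_trace_def by (simp add: sum_distrib_left)
  then have "mat_trace A = c * of_nat k" using k c by (simp add: field_simps)
  then show ?thesis by blast
qed

lemma mat_alg:
  fixes X Y :: "complex mat"
  assumes X: "X \<in> carrier_mat n n" and Y: "Y \<in> carrier_mat n n"
    and h1: "X * X = c1 \<cdot>\<^sub>m X - Y" and h2: "Y * X = c2 \<cdot>\<^sub>m Y"
  shows "Y * Y = (c2 * (c1 - c2)) \<cdot>\<^sub>m Y"
    and "((c1 - c2) \<cdot>\<^sub>m X - Y) * ((c1 - c2) \<cdot>\<^sub>m X - Y) = ((c1 - c2) * c1) \<cdot>\<^sub>m ((c1 - c2) \<cdot>\<^sub>m X - Y)"
proof -
  have XX: "X * X \<in> carrier_mat n n" using X by simp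
  have e1: "(X * X) $$ (i,j) = c1 * X $$ (i,j) - Y $$ (i,j)" if "i < n" "j < n" for i j
    using that X Y by (subst h1) simp
  have Y': "Y = c1 \<cdot>\<^sub>m X - X * X"
    by (rule eq_matI) (use X Y e1 in auto)
  have XY: "X * Y = c2 \<cdot>\<^sub>m Y"
  proof -
    have "X * Y = X * (c1 \<cdot>\<^sub>m X) - X * (X * X)"
      by (subst Y') (rule mult_minus_distrib_mat[of _ n n], use X in auto)
    also have "\<dots> = c1 \<cdot>\<^sub>m (X * X) - (X * X) * X"
      using X by (simp add: mult_smult_distrib[of _ n n])
    also have "\<dots> = (c1 \<cdot>\<^sub>m X - X * X) * X"
    proof -
      have "(c1 \<cdot>\<^sub>m X - X * X) * X = (c1 \<cdot>\<^sub>m X) * X - (X * X) * X"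
        by (rule minus_mult_distrib_mat[of _ n n]) (use X in auto)
      then show ?thesis using X by (simp add: mult_smult_assoc_mat[of _ n n])
    qed
    also have "\<dots> = Y * X" using Y' by simp
    finally show ?thesis using h2 by simp
  qed
  have YY: "Y * Y = c1 \<cdot>\<^sub>m (Y * X) - (Y * X) * X"
  proof -
    have "Y * Y = Y * (c1 \<cdot>\<^sub>m X) - Y * (X * X)"
      by (subst (2) Y') (rule mult_minus_distrib_mat[of _ n n], use X Y in auto)
    also have "\<dots> = c1 \<cdot>\<^sub>m (Y * X) - (Y * X) * X"
      using X Y by (simp add: mult_smult_distrib[of _ n n])
    finally show ?thesis .
  qed
  also have "\<dots> = c1 \<cdot>\<^sub>m (c2 \<cdot>\<^sub>m Y) - c2 \<cdot>\<^sub>m (Y * X)"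
    using h2 X Y by (simp add: mult_smult_assoc_mat[of _ n n])
  also have "\<dots> = (c2 * (c1 - c2)) \<cdot>\<^sub>m Y"
    using h2 by (intro eq_matI) (use Y in \<open>auto simp: algebra_simps\<close>)
  finally show YY2: "Y * Y = (c2 * (c1 - c2)) \<cdot>\<^sub>m Y" .
  let ?d = "c1 - c2"
  have "(?d \<cdot>\<^sub>m X - Y) * (?d \<cdot>\<^sub>m X - Y) = (?d \<cdot>\<^sub>m X) * (?d \<cdot>\<^sub>m X - Y) - Y * (?d \<cdot>\<^sub>m X - Y)"
    by (rule minus_mult_distrib_mat[of _ n n]) (use X Y in auto)
  also have "(?d \<cdot>\<^sub>m X) * (?d \<cdot>\<^sub>m X - Y) = (?d \<cdot>\<^sub>m X) * (?d \<cdot>\<^sub>m X) - (?d \<cdot>\<^sub>m X) * Y"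
    by (rule mult_minus_distrib_mat[of _ n n]) (use X Y in auto)
  also have "\<dots> = ?d \<cdot>\<^sub>m (?d \<cdot>\<^sub>m (X * X)) - ?d \<cdot>\<^sub>m (X * Y)"
    using X Y by (simp add: mult_smult_distrib[of _ n n] mult_smult_assoc_mat[of _ n n])
  also have "?d \<cdot>\<^sub>m (?d \<cdot>\<^sub>m (X * X)) = (?d * ?d) \<cdot>\<^sub>m (X * X)"
    by (intro eq_matI) (use X in auto)
  also have "Y * (?d \<cdot>\<^sub>m X - Y) = Y * (?d \<cdot>\<^sub>m X) - Y * Y"
    by (rule mult_minus_distrib_mat[of _ n n]) (use X Y in auto)
  also have "\<dots> = ?d \<cdot>\<^sub>m (Y * X) - Y * Y"
    using X Y by (simp add: mult_smult_distrib[of _ n n])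
  finally have "(?d \<cdot>\<^sub>m X - Y) * (?d \<cdot>\<^sub>m X - Y) =
     (?d * ?d) \<cdot>\<^sub>m (c1 \<cdot>\<^sub>m X - Y) - ?d \<cdot>\<^sub>m (c2 \<cdot>\<^sub>m Y) - (?d \<cdot>\<^sub>m (c2 \<cdot>\<^sub>m Y) - (c2 * (c1 - c2)) \<cdot>\<^sub>m Y)"
    unfolding h1 XY h2 YY2 .
  also have "\<dots> = (?d * c1) \<cdot>\<^sub>m (?d \<cdot>\<^sub>m X - Y)"
    by (intro eq_matI) (use X Y in \<open>auto simp: algebra_simps\<close>)
  finally show "(?d \<cdot>\<^sub>m X - Y) * (?d \<cdot>\<^sub>m X - Y) = (?d * c1) \<cdot>\<^sub>m (?d \<cdot>\<^sub>m X - Y)" .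
qed

definition rhat :: "('g, 'm) monoid_scheme \<Rightarrow> nat \<Rightarrow> ('g \<Rightarrow> complex mat) \<Rightarrow> ('g \<Rightarrow> complex) \<Rightarrow> complex mat" where
  "rhat G n \<rho> f = mat n n (\<lambda>(i,j). \<Sum>g\<in>carrier G. f g * \<rho> g $$ (i,j))"

definition conv :: "('g, 'm) monoid_scheme \<Rightarrow> ('g \<Rightarrow> complex) \<Rightarrow> ('g \<Rightarrow> complex) \<Rightarrow> 'g \<Rightarrow> complex" where
  "conv G f h = (\<lambda>g. \<Sum>v\<in>carrier G. f (g \<otimes>\<^bsub>G\<^esub> inv\<^bsub>G\<^esub> v) * h v)"

locale repG =
  fixes G :: "('g, 'm) monoid_scheme" and n :: nat and \<rho> :: "'g \<Rightarrow> complex mat"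
  assumes grp: "group G" and fin: "finite (carrier G)" and rep: "is_rep G n \<rho>"
begin

lemma rho_carrier[simp]: "g \<in> carrier G \<Longrightarrow> \<rho> g \<in> carrier_mat n n"
  using rep unfolding is_rep_def by auto

lemma rho_mult: "g \<in> carrier G \<Longrightarrow> h \<in> carrier G \<Longrightarrow> \<rho> (g \<otimes>\<^bsub>G\<^esub> h) = \<rho> g * \<rho> h"
  using rep unfolding is_rep_def by auto

lemma rho_dims[simp]: "g \<in> carrier G \<Longrightarrow> dim_row (\<rho> g) = n" "g \<in> carrier G \<Longrightarrow> dim_col (\<rho> g) = n"
  using rho_carrier[of g] unfolding carrier_mat_def by auto

lemma rhat_carrier[simp]: "rhat G n \<rho> f \<in> carrier_mat n n"
  unfolding rhat_def by simp

lemma rhat_dims[simp]: "dim_row (rhat G n \<rho> f) = n" "dim_col (rhat G n \<rho> f) = n"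
  unfolding rhat_def by simp_all

lemma rhat_index: "i < n \<Longrightarrow> j < n \<Longrightarrow> rhat G n \<rho> f $$ (i,j) = (\<Sum>g\<in>carrier G. f g * \<rho> g $$ (i,j))"
  unfolding rhat_def by simp

lemma rhat_cong: "(\<And>g. g \<in> carrier G \<Longrightarrow> f g = h g) \<Longrightarrow> rhat G n \<rho> f = rhat G n \<rho> h"
  unfolding rhat_def by (intro eq_matI) auto

lemma rhat_add: "rhat G n \<rho> (\<lambda>g. f g + h g) = rhat G n \<rho> f + rhat G n \<rho> h"
  by (intro eq_matI) (auto simp: rhat_index algebra_simps sum.distrib)

lemma rhat_minus: "rhat G n \<rho> (\<lambda>g. f g - h g) = rhat G n \<rho> f - rhat G n \<rho> h"
  by (intro eq_matI) (auto simp: rhat_index algebra_simps sum_subtractf)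

lemma rhat_smult: "rhat G n \<rho> (\<lambda>g. c * f g) = c \<cdot>\<^sub>m rhat G n \<rho> f"
  by (intro eq_matI) (auto simp: rhat_index algebra_simps sum_distrib_left)

lemma rhat_sum: "finite I \<Longrightarrow> rhat G n \<rho> (\<lambda>g. \<Sum>i\<in>I. f i g) = mat n n (\<lambda>(a,b). \<Sum>i\<in>I. rhat G n \<rho> (f i) $$ (a,b))"
  by (intro eq_matI) (auto simp: rhat_index sum_distrib_right intro: sum.swap)

lemma reindex_right:
  assumes v: "v \<in> carrier G"
  shows "(\<Sum>g\<in>carrier G. F g) = (\<Sum>u\<in>carrier G. F (u \<otimes>\<^bsub>G\<^esub> v))"
proof -
  interpret group G by (rule grp)
  show ?thesis
    by (rule sum.reindex_bij_witness[of _ "\<lambda>u. u \<otimes>\<^bsub>G\<^esub> v" "\<lambda>g. g \<otimes>\<^bsub>G\<^esub> inv\<^bsub>G\<^esub> v"])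
       (use v in \<open>auto simp: m_assoc\<close>)
qed

lemma reindex_left:
  assumes v: "v \<in> carrier G"
  shows "(\<Sum>g\<in>carrier G. F g) = (\<Sum>u\<in>carrier G. F (v \<otimes>\<^bsub>G\<^esub> u))"
proof -
  interpret group G by (rule grp)
  show ?thesis
    by (rule sum.reindex_bij_witness[of _ "\<lambda>u. v \<otimes>\<^bsub>G\<^esub> u" "\<lambda>g. inv\<^bsub>G\<^esub> v \<otimes>\<^bsub>G\<^esub> g"])
       (use v in \<open>auto simp: m_assoc[symmetric]\<close>)
qed

lemma rhat_mult: "rhat G n \<rho> f * rhat G n \<rho> h = rhat G n \<rho> (conv G f h)"
proof (rule eq_matI)
  interpret group G by (rule grp)
  fix i j assume i: "i < dim_row (rhat G n \<rho> (conv G f h))" and j: "j < dim_col (rhat G n \<rho> (conv G f h))"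
  then have i: "i < n" and j: "j < n" by auto
  have "(rhat G n \<rho> f * rhat G n \<rho> h) $$ (i,j) =
      (\<Sum>k<n. (\<Sum>u\<in>carrier G. f u * \<rho> u $$ (i,k)) * (\<Sum>v\<in>carrier G. h v * \<rho> v $$ (k,j)))"
    using i j by (simp add: scalar_prod_def rhat_index atLeast0LessThan)
  also have "\<dots> = (\<Sum>u\<in>carrier G. \<Sum>v\<in>carrier G. f u * h v * (\<Sum>k<n. \<rho> u $$ (i,k) * \<rho> v $$ (k,j)))"
  proof -
    have "(\<Sum>k<n. (\<Sum>u\<in>carrier G. f u * \<rho> u $$ (i,k)) * (\<Sum>v\<in>carrier G. h v * \<rho> v $$ (k,j)))
       = (\<Sum>k<n. \<Sum>u\<in>carrier G. \<Sum>v\<in>carrier G. f u * h v * (\<rho> u $$ (i,k) * \<rho> v $$ (k,j)))"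
      by (simp add: sum_product mult_ac)
    also have "\<dots> = (\<Sum>u\<in>carrier G. \<Sum>k<n. \<Sum>v\<in>carrier G. f u * h v * (\<rho> u $$ (i,k) * \<rho> v $$ (k,j)))"
      by (rule sum.swap)
    also have "\<dots> = (\<Sum>u\<in>carrier G. \<Sum>v\<in>carrier G. \<Sum>k<n. f u * h v * (\<rho> u $$ (i,k) * \<rho> v $$ (k,j)))"
      by (intro sum.cong refl) (rule sum.swap)
    also have "\<dots> = (\<Sum>u\<in>carrier G. \<Sum>v\<in>carrier G. f u * h v * (\<Sum>k<n. \<rho> u $$ (i,k) * \<rho> v $$ (k,j)))"
      by (simp add: sum_distrib_left)
    finally show ?thesis .
  qed
  also have "\<dots> = (\<Sum>u\<in>carrier G. \<Sum>v\<in>carrier G. f u * h v * \<rho> (u \<otimes>\<^bsub>G\<^esub> v) $$ (i,j))"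
    by (intro sum.cong refl) (use i j in \<open>simp add: rho_mult scalar_prod_def atLeast0LessThan\<close>)
  also have "\<dots> = (\<Sum>v\<in>carrier G. \<Sum>u\<in>carrier G. f (u \<otimes>\<^bsub>G\<^esub> v \<otimes>\<^bsub>G\<^esub> inv\<^bsub>G\<^esub> v) * h v * \<rho> (u \<otimes>\<^bsub>G\<^esub> v) $$ (i,j))"
    by (subst sum.swap) (intro sum.cong refl, simp add: m_assoc)
  also have "\<dots> = (\<Sum>v\<in>carrier G. \<Sum>g\<in>carrier G. f (g \<otimes>\<^bsub>G\<^esub> inv\<^bsub>G\<^esub> v) * h v * \<rho> g $$ (i,j))"
  proof (rule sum.cong[OF refl])
    fix v assume v: "v \<in> carrier G"
    show "(\<Sum>u\<in>carrier G. f (u \<otimes>\<^bsub>G\<^esub> v \<otimes>\<^bsub>G\<^esub> inv\<^bsub>G\<^esub> v) * h v * \<rho> (u \<otimes>\<^bsub>G\<^esub> v) $$ (i,j))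
       = (\<Sum>g\<in>carrier G. f (g \<otimes>\<^bsub>G\<^esub> inv\<^bsub>G\<^esub> v) * h v * \<rho> g $$ (i,j))"
      using reindex_right[OF v, of "\<lambda>g. f (g \<otimes>\<^bsub>G\<^esub> inv\<^bsub>G\<^esub> v) * h v * \<rho> g $$ (i,j)"] by simp
  qed
  also have "\<dots> = rhat G n \<rho> (conv G f h) $$ (i,j)"
    using i j by (simp add: rhat_index conv_def sum_distrib_right) (subst sum.swap, simp)
  finally show "(rhat G n \<rho> f * rhat G n \<rho> h) $$ (i,j) = rhat G n \<rho> (conv G f h) $$ (i,j)" .
qed auto

lemma rhat_trace: "mat_trace (rhat G n \<rho> f) = (\<Sum>g\<in>carrier G. f g * mat_trace (\<rho> g))"
  unfolding mat_trace_def by (simp add: rhat_index sum_distrib_left) (subst sum.swap, rule sum.cong, simp_all)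

lemma mat_unit_entry:
  fixes A :: "complex mat"
  assumes "A \<in> carrier_mat n n" "i < n" "j < n"
  shows "(A *\<^sub>v unit_vec n j) $ i = A $$ (i,j)"
  using assms by simp

lemma mat_vec_zero:
  fixes A :: "complex mat"
  assumes "A \<in> carrier_mat n n"
  shows "A *\<^sub>v 0\<^sub>v n = 0\<^sub>v n"
  by (rule eq_vecI) (use assms in auto)

lemma rho_S: 
  assumes h: "h \<in> carrier G"
  shows "\<rho> h * rhat G n \<rho> (\<lambda>_. 1) = rhat G n \<rho> (\<lambda>_. 1)"
proof (rule eq_matI)
  fix i j assume "i < dim_row (rhat G n \<rho> (\<lambda>_. 1))" "j < dim_col (rhat G n \<rho> (\<lambda>_. 1))"
  then have i: "i < n" and j: "j < n" by auto
  have "(\<rho> h * rhat G n \<rho> (\<lambda>_. 1)) $$ (i,j) = (\<Sum>k<n. \<rho> h $$ (i,k) * (\<Sum>g\<in>carrier G. \<rho> g $$ (k,j)))"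
    using i j h by (simp add: scalar_prod_def rhat_index atLeast0LessThan)
  also have "\<dots> = (\<Sum>g\<in>carrier G. \<Sum>k<n. \<rho> h $$ (i,k) * \<rho> g $$ (k,j))"
    by (simp add: sum_distrib_left) (rule sum.swap)
  also have "\<dots> = (\<Sum>g\<in>carrier G. \<rho> (h \<otimes>\<^bsub>G\<^esub> g) $$ (i,j))"
    by (rule sum.cong[OF refl]) (use i j h in \<open>simp add: rho_mult scalar_prod_def atLeast0LessThan\<close>)
  also have "\<dots> = (\<Sum>g\<in>carrier G. \<rho> g $$ (i,j))"
    using reindex_left[OF h, of "\<lambda>g. \<rho> g $$ (i,j)"] by simp
  also have "\<dots> = rhat G n \<rho> (\<lambda>_. 1) $$ (i,j)" using i j by (simp add: rhat_index)
  finally show "(\<rho> h * rhat G n \<rho> (\<lambda>_. 1)) $$ (i,j) = rhat G n \<rho> (\<lambda>_. 1) $$ (i,j)" .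
qed (use h in auto)

lemma rhat_const_zero:
  assumes irr: "irreducible_rep G n \<rho>" and n1: "n \<noteq> 1"
  shows "rhat G n \<rho> (\<lambda>_. 1) = 0\<^sub>m n n"
proof -
  let ?S = "rhat G n \<rho> (\<lambda>_. 1)"
  have npos: "n > 0" using irr unfolding irreducible_rep_def by auto
  have noinv: "\<not> (\<exists>W. invariant_subspace G n \<rho> W \<and> W \<noteq> {0\<^sub>v n} \<and> W \<noteq> carrier_vec n)"
    using irr unfolding irreducible_rep_def by auto
  define W where "W = {v \<in> carrier_vec n. \<forall>h\<in>carrier G. \<rho> h *\<^sub>v v = v}"
  have invW: "invariant_subspace G n \<rho> W"
    unfolding invariant_subspace_def W_def
    by (auto simp: mat_vec_zero mult_add_distrib_mat_vec[of _ n n] mult_mat_vec[of _ n n])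
  have "W \<noteq> carrier_vec n"
  proof
    assume Wc: "W = carrier_vec n"
    have one: "\<rho> h = 1\<^sub>m n" if h: "h \<in> carrier G" for h
    proof (rule eq_matI)
      fix i j assume "i < dim_row (1\<^sub>m n :: complex mat)" "j < dim_col (1\<^sub>m n :: complex mat)"
      then have i: "i < n" and j: "j < n" by auto
      have "unit_vec n j \<in> W" using Wc by simp
      then have "\<rho> h *\<^sub>v unit_vec n j = unit_vec n j" using h unfolding W_def by auto
      then have "(\<rho> h *\<^sub>v unit_vec n j) $ i = unit_vec n j $ i" by simp
      then show "\<rho> h $$ (i,j) = 1\<^sub>m n $$ (i,j)" using i j h by simp
    qed (use that in auto)
    define W' where "W' = {c \<cdot>\<^sub>v unit_vec n 0 | c :: complex. True}"
    have "invariant_subspace G n \<rho> W'"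
      unfolding invariant_subspace_def W'_def
    proof (intro conjI ballI allI)
      show "{c \<cdot>\<^sub>v unit_vec n 0 | c :: complex. True} \<subseteq> carrier_vec n" by auto
      show "0\<^sub>v n \<in> {c \<cdot>\<^sub>v unit_vec n 0 | c :: complex. True}"
        by (rule CollectI, rule exI[of _ 0]) (auto intro!: eq_vecI)
    next
      fix v w assume "v \<in> {c \<cdot>\<^sub>v unit_vec n 0 | c :: complex. True}" "w \<in> {c \<cdot>\<^sub>v unit_vec n 0 | c :: complex. True}"
      then obtain a b where "v = a \<cdot>\<^sub>v unit_vec n 0" "w = b \<cdot>\<^sub>v unit_vec n 0" by auto
      then show "v + w \<in> {c \<cdot>\<^sub>v unit_vec n 0 | c :: complex. True}"
        by (intro CollectI exI[of _ "a + b"]) (auto intro!: eq_vecI simp: algebra_simps)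
    next
      fix c :: complex and v assume "v \<in> {c \<cdot>\<^sub>v unit_vec n 0 | c :: complex. True}"
      then obtain a where "v = a \<cdot>\<^sub>v unit_vec n 0" by auto
      then show "c \<cdot>\<^sub>v v \<in> {c \<cdot>\<^sub>v unit_vec n 0 | c :: complex. True}"
        by (intro CollectI exI[of _ "c * a"]) (auto intro!: eq_vecI)
    next
      fix g w assume g: "g \<in> carrier G" and w: "w \<in> {c \<cdot>\<^sub>v unit_vec n 0 | c :: complex. True}"
      then have "w \<in> carrier_vec n" by auto
      then show "\<rho> g *\<^sub>v w \<in> {c \<cdot>\<^sub>v unit_vec n 0 | c :: complex. True}" using one[OF g] w by simp
    qed
    moreover have "W' \<noteq> {0\<^sub>v n}"
    proof
      assume "W' = {0\<^sub>v n}"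
      moreover have "(1::complex) \<cdot>\<^sub>v unit_vec n 0 \<in> W'" unfolding W'_def by blast
      ultimately have "(1::complex) \<cdot>\<^sub>v unit_vec n 0 = 0\<^sub>v n" by blast
      then have "((1::complex) \<cdot>\<^sub>v unit_vec n 0) $ 0 = (0\<^sub>v n :: complex vec) $ 0" by simp
      then show False using npos by simp
    qed
    moreover have "W' \<noteq> carrier_vec n"
    proof
      assume "W' = carrier_vec n"
      then have "unit_vec n 1 \<in> W'" by simp
      then obtain c :: complex where c: "unit_vec n 1 = c \<cdot>\<^sub>v unit_vec n 0" unfolding W'_def by blast
      have n2: "1 < n" using npos n1 by auto
      have "(unit_vec n 1 :: complex vec) $ 1 = (c \<cdot>\<^sub>v unit_vec n 0) $ 1" using c by simp
      then show False using n2 by simp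
    qed
    ultimately show False using noinv by blast
  qed
  then have W0: "W = {0\<^sub>v n}" using invW noinv by blast
  have Sv: "?S *\<^sub>v v = 0\<^sub>v n" if v: "v \<in> carrier_vec n" for v
  proof -
    have "?S *\<^sub>v v \<in> W" unfolding W_def
    proof (intro CollectI conjI ballI)
      show "?S *\<^sub>v v \<in> carrier_vec n" using v by (intro mult_mat_vec_carrier[of _ n n]) simp_all
      fix h assume h: "h \<in> carrier G"
      have "\<rho> h *\<^sub>v (?S *\<^sub>v v) = (\<rho> h * ?S) *\<^sub>v v"
        using h v by (simp add: assoc_mult_mat_vec[of _ n n _ n, symmetric])
      also have "\<dots> = ?S *\<^sub>v v" using rho_S[OF h] by simp
      finally show "\<rho> h *\<^sub>v (?S *\<^sub>v v) = ?S *\<^sub>v v" .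
    qed
    then show ?thesis using W0 by simp
  qed
  show ?thesis
  proof (rule eq_matI)
    fix i j assume "i < dim_row (0\<^sub>m n n :: complex mat)" "j < dim_col (0\<^sub>m n n :: complex mat)"
    then have i: "i < n" and j: "j < n" by auto
    have "?S $$ (i,j) = (?S *\<^sub>v unit_vec n j) $ i" using i j by simp
    also have "\<dots> = 0" using Sv[of "unit_vec n j"] i by simp
    finally show "?S $$ (i,j) = 0\<^sub>m n n $$ (i,j)" using i j by simp
  qed auto
qed

end

locale egq =
  fixes Pts :: "'p set" and Lns :: "'l set" and inc :: "'p \<Rightarrow> 'l \<Rightarrow> bool"
    and s t :: nat and P y :: 'p
    and G :: "('g, 'm) monoid_scheme" (structure) and ap :: "'g \<Rightarrow> 'p \<Rightarrow> 'p" and al :: "'g \<Rightarrow> 'l \<Rightarrow> 'l"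
  assumes EGQ: "is_EGQ Pts Lns inc s t P G ap al"
    and yN: "y \<in> noncollinear_pts Pts Lns inc P"

sublocale egq \<subseteq> group G
  using EGQ unfolding is_EGQ_def by auto

context egq
begin

abbreviation col where "col \<equiv> collinear Lns inc"
abbreviation NC where "NC \<equiv> noncollinear_pts Pts Lns inc P"

lemma GQ: "is_GQ Pts Lns inc s t" using EGQ unfolding is_EGQ_def by auto
lemma PinPts: "P \<in> Pts" using EGQ unfolding is_EGQ_def by auto
lemma finPts: "finite Pts" and finLns: "finite Lns" and s1: "s \<ge> 1" and t1: "t \<ge> 1"
  using GQ unfolding is_GQ_def by auto
lemma inc_in: "inc x l \<Longrightarrow> x \<in> Pts" "inc x l \<Longrightarrow> l \<in> Lns"
  using GQ unfolding is_GQ_def by auto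
lemma card_line: "l \<in> Lns \<Longrightarrow> card {x\<in>Pts. inc x l} = s + 1"
  using GQ unfolding is_GQ_def by auto
lemma card_pt: "x \<in> Pts \<Longrightarrow> card {l\<in>Lns. inc x l} = t + 1"
  using GQ unfolding is_GQ_def by auto
lemma two_pts: "x \<noteq> z \<Longrightarrow> inc x l \<Longrightarrow> inc z l \<Longrightarrow> inc x m \<Longrightarrow> inc z m \<Longrightarrow> l = m"
proof -
  assume a: "x \<noteq> z" "inc x l" "inc z l" "inc x m" "inc z m"
  have "x \<in> Pts" "z \<in> Pts" "l \<in> Lns" "m \<in> Lns" using a inc_in by auto
  then show "l = m" using GQ a unfolding is_GQ_def by blast
qed
lemma gq_ax: "x \<in> Pts \<Longrightarrow> l \<in> Lns \<Longrightarrow> \<not> inc x l \<Longrightarrow> \<exists>!z. z \<in> Pts \<and> inc z l \<and> col x z"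
  using GQ unfolding is_GQ_def by auto
lemma gq_uniq: "x \<in> Pts \<Longrightarrow> l \<in> Lns \<Longrightarrow> \<not> inc x l \<Longrightarrow> inc z1 l \<Longrightarrow> inc z2 l \<Longrightarrow> col x z1 \<Longrightarrow> col x z2 \<Longrightarrow> z1 = z2"
proof -
  assume a: "x \<in> Pts" "l \<in> Lns" "\<not> inc x l" "inc z1 l" "inc z2 l" "col x z1" "col x z2"
  have "z1 \<in> Pts" "z2 \<in> Pts" using a inc_in by auto
  then show "z1 = z2" using gq_ax[OF a(1-3)] a by blast
qed
lemma col_intro: "inc x l \<Longrightarrow> inc z l \<Longrightarrow> col x z"
  unfolding collinear_def using inc_in by blast
lemma col_sym: "col x z \<Longrightarrow> col z x"
  unfolding collinear_def by blast
lemma colE: "col x z \<Longrightarrow> (\<And>l. l \<in> Lns \<Longrightarrow> inc x l \<Longrightarrow> inc z l \<Longrightarrow> thesis) \<Longrightarrow> thesis"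
  unfolding collinear_def by blast

lemma act: "is_aut_action G Pts Lns inc ap al" using EGQ unfolding is_EGQ_def by auto
lemma ap_Pts: "g \<in> carrier G \<Longrightarrow> x \<in> Pts \<Longrightarrow> ap g x \<in> Pts"
proof -
  assume "g \<in> carrier G" "x \<in> Pts"
  then have "bij_betw (ap g) Pts Pts" using act unfolding is_aut_action_def by blast
  then show ?thesis using \<open>x \<in> Pts\<close> by (rule bij_betw_apply)
qed
lemma al_Lns: "g \<in> carrier G \<Longrightarrow> l \<in> Lns \<Longrightarrow> al g l \<in> Lns"
proof -
  assume "g \<in> carrier G" "l \<in> Lns"
  then have "bij_betw (al g) Lns Lns" using act unfolding is_aut_action_def by blast
  then show ?thesis using \<open>l \<in> Lns\<close> by (rule bij_betw_apply)
qed
lemma act_parts: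
  "\<forall>g\<in>carrier G. bij_betw (ap g) Pts Pts \<and> bij_betw (al g) Lns Lns \<and>
        (\<forall>x\<in>Pts. \<forall>l\<in>Lns. inc x l \<longleftrightarrow> inc (ap g x) (al g l))"
  "\<forall>g\<in>carrier G. \<forall>h\<in>carrier G.
        (\<forall>x\<in>Pts. ap (g \<otimes> h) x = ap g (ap h x)) \<and>
        (\<forall>l\<in>Lns. al (g \<otimes> h) l = al g (al h l))"
  "\<forall>x\<in>Pts. ap \<one> x = x" "\<forall>l\<in>Lns. al \<one> l = l"
  using act unfolding is_aut_action_def by simp_all
lemma inc_act: "g \<in> carrier G \<Longrightarrow> x \<in> Pts \<Longrightarrow> l \<in> Lns \<Longrightarrow> inc (ap g x) (al g l) \<longleftrightarrow> inc x l"
  using act_parts(1) by blast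
lemma ap_mult: "g \<in> carrier G \<Longrightarrow> h \<in> carrier G \<Longrightarrow> x \<in> Pts \<Longrightarrow> ap (g \<otimes> h) x = ap g (ap h x)"
  using act_parts(2) by blast
lemma al_mult: "g \<in> carrier G \<Longrightarrow> h \<in> carrier G \<Longrightarrow> l \<in> Lns \<Longrightarrow> al (g \<otimes> h) l = al g (al h l)"
  using act_parts(2) by blast
lemma ap_one: "x \<in> Pts \<Longrightarrow> ap \<one> x = x"
  using act_parts(3) by blast
lemma al_one: "l \<in> Lns \<Longrightarrow> al \<one> l = l"
  using act_parts(4) by blast
lemma ap_inv: "g \<in> carrier G \<Longrightarrow> x \<in> Pts \<Longrightarrow> ap (inv g) (ap g x) = x"
proof -
  assume g: "g \<in> carrier G" and x: "x \<in> Pts"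
  have "ap (inv g \<otimes> g) x = ap (inv g) (ap g x)" using g x by (intro ap_mult) auto
  moreover have "inv g \<otimes> g = \<one>" using g by (rule l_inv)
  ultimately show ?thesis using ap_one[OF x] by simp
qed
lemma ap_inv2: "g \<in> carrier G \<Longrightarrow> x \<in> Pts \<Longrightarrow> ap g (ap (inv g) x) = x"
proof -
  assume g: "g \<in> carrier G" and x: "x \<in> Pts"
  have "ap (g \<otimes> inv g) x = ap g (ap (inv g) x)" using g x by (intro ap_mult) auto
  moreover have "g \<otimes> inv g = \<one>" using g by (rule r_inv)
  ultimately show ?thesis using ap_one[OF x] by simp
qed
lemma al_inv: "g \<in> carrier G \<Longrightarrow> l \<in> Lns \<Longrightarrow> al (inv g) (al g l) = l"
proof -
  assume g: "g \<in> carrier G" and x: "l \<in> Lns"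
  have "al (inv g \<otimes> g) l = al (inv g) (al g l)" using g x by (intro al_mult) auto
  moreover have "inv g \<otimes> g = \<one>" using g by (rule l_inv)
  ultimately show ?thesis using al_one[OF x] by simp
qed
lemma al_inv2: "g \<in> carrier G \<Longrightarrow> l \<in> Lns \<Longrightarrow> al g (al (inv g) l) = l"
proof -
  assume g: "g \<in> carrier G" and x: "l \<in> Lns"
  have "al (g \<otimes> inv g) l = al g (al (inv g) l)" using g x by (intro al_mult) auto
  moreover have "g \<otimes> inv g = \<one>" using g by (rule r_inv)
  ultimately show ?thesis using al_one[OF x] by simp
qed
lemma ap_inj: "g \<in> carrier G \<Longrightarrow> x \<in> Pts \<Longrightarrow> z \<in> Pts \<Longrightarrow> ap g x = ap g z \<Longrightarrow> x = z"
  by (metis ap_inv)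

lemma inc_act1: "g \<in> carrier G \<Longrightarrow> inc x l \<Longrightarrow> inc (ap g x) (al g l)"
proof -
  assume g: "g \<in> carrier G" and i: "inc x l"
  have "x \<in> Pts" "l \<in> Lns" using i inc_in by auto
  then show ?thesis using inc_act[OF g] i by simp
qed

lemma col_act1: "g \<in> carrier G \<Longrightarrow> col x z \<Longrightarrow> col (ap g x) (ap g z)"
proof -
  assume g: "g \<in> carrier G" and c: "col x z"
  obtain l where "l \<in> Lns" "inc x l" "inc z l" using c colE by blast
  then have "inc (ap g x) (al g l)" "inc (ap g z) (al g l)" using inc_act1[OF g] by auto
  then show ?thesis by (rule col_intro)
qed

lemma col_act: "g \<in> carrier G \<Longrightarrow> x \<in> Pts \<Longrightarrow> z \<in> Pts \<Longrightarrow> col (ap g x) (ap g z) \<longleftrightarrow> col x z"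
proof -
  assume g: "g \<in> carrier G" and x: "x \<in> Pts" and z: "z \<in> Pts"
  have "col x z" if c: "col (ap g x) (ap g z)"
  proof -
    have "col (ap (inv g) (ap g x)) (ap (inv g) (ap g z))" using col_act1[OF inv_closed[OF g] c] .
    then show "col x z" using ap_inv[OF g x] ap_inv[OF g z] by simp
  qed
  then show ?thesis using col_act1[OF g, of x z] by blast
qed

lemma elation: "g \<in> carrier G \<Longrightarrow> is_elation Pts Lns inc P (ap g) (al g)"
  using EGQ unfolding is_EGQ_def by auto

lemma al_fix_P: "g \<in> carrier G \<Longrightarrow> inc P l \<Longrightarrow> al g l = l"
proof -
  assume g: "g \<in> carrier G" and i: "inc P l"
  have l: "l \<in> Lns" using i inc_in by auto
  have "((\<forall>x\<in>Pts. ap g x = x) \<and> (\<forall>l\<in>Lns. al g l = l)) \<or>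
      ((\<forall>l\<in>Lns. inc P l \<longrightarrow> al g l = l) \<and> (\<forall>x\<in>Pts. \<not> col P x \<longrightarrow> ap g x \<noteq> x))"
    using elation[OF g] unfolding is_elation_def .
  then show ?thesis using l i by blast
qed

lemma two_lines_P: "\<exists>l1 l2. l1 \<in> Lns \<and> l2 \<in> Lns \<and> inc P l1 \<and> inc P l2 \<and> l1 \<noteq> l2"
proof -
  have c: "card {l\<in>Lns. inc P l} = t + 1" using card_pt[OF PinPts] .
  then have "card {l\<in>Lns. inc P l} \<ge> 2" using t1 by simp
  then obtain l1 l2 where "l1 \<in> {l\<in>Lns. inc P l}" "l2 \<in> {l\<in>Lns. inc P l}" "l1 \<noteq> l2"
  proof -
    assume r: "\<And>l1 l2. l1 \<in> {l\<in>Lns. inc P l} \<Longrightarrow> l2 \<in> {l\<in>Lns. inc P l} \<Longrightarrow> l1 \<noteq> l2 \<Longrightarrow> thesis"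
    assume c2: "card {l\<in>Lns. inc P l} \<ge> 2"
    then have "{l\<in>Lns. inc P l} \<noteq> {}" by (metis card.empty not_numeral_le_zero)
    then obtain a where a: "a \<in> {l\<in>Lns. inc P l}" by blast
    have "card ({l\<in>Lns. inc P l} - {a}) \<ge> 1" using c2 a by (simp add: card_Diff_singleton_if card.infinite)
    then have "{l\<in>Lns. inc P l} - {a} \<noteq> {}" by (metis card.empty not_one_le_zero)
    then obtain b where "b \<in> {l\<in>Lns. inc P l} - {a}" by blast
    then show thesis using r a by blast
  qed
  then show ?thesis by blast
qed

lemma ap_P: "g \<in> carrier G \<Longrightarrow> ap g P = P"
proof (rule ccontr)
  assume g: "g \<in> carrier G" and ne: "ap g P \<noteq> P"
  obtain l1 l2 where l: "l1 \<in> Lns" "l2 \<in> Lns" "inc P l1" "inc P l2" "l1 \<noteq> l2" using two_lines_P by blast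
  have "inc (ap g P) l1" using inc_act1[OF g l(3)] al_fix_P[OF g l(3)] by simp
  moreover have "inc (ap g P) l2" using inc_act1[OF g l(4)] al_fix_P[OF g l(4)] by simp
  ultimately show False using two_pts[OF ne _ l(3) _ l(4)] l(5) by blast
qed

lemma NC_act: "g \<in> carrier G \<Longrightarrow> x \<in> NC \<Longrightarrow> ap g x \<in> NC"
proof -
  assume g: "g \<in> carrier G" and x: "x \<in> NC"
  then have xP: "x \<in> Pts" "\<not> col P x" unfolding noncollinear_pts_def by auto
  have "col (ap g P) (ap g x) \<longleftrightarrow> col P x" using col_act[OF g PinPts xP(1)] .
  then have "\<not> col P (ap g x)" using ap_P[OF g] xP by simp
  then show ?thesis using ap_Pts[OF g xP(1)] unfolding noncollinear_pts_def by simp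
qed

lemma NC_iff: "x \<in> NC \<longleftrightarrow> x \<in> Pts \<and> \<not> col P x"
  unfolding noncollinear_pts_def by auto

lemma yPts: "y \<in> Pts" and ync: "\<not> col P y" using yN NC_iff by auto

lemma reg_all: "\<forall>x\<in>NC. \<forall>z\<in>NC. \<exists>!g. g \<in> carrier G \<and> ap g x = z"
  using EGQ unfolding is_EGQ_def by (elim conjE) assumption
lemma regular: "x \<in> NC \<Longrightarrow> \<exists>!g. g \<in> carrier G \<and> ap g y = x"
  using reg_all yN by blast

lemma orbit_inj: "g \<in> carrier G \<Longrightarrow> h \<in> carrier G \<Longrightarrow> ap g y = ap h y \<Longrightarrow> g = h"
proof -
  assume g: "g \<in> carrier G" and h: "h \<in> carrier G" and e: "ap g y = ap h y"
  have "\<exists>!k. k \<in> carrier G \<and> ap k y = ap g y" using regular[OF NC_act[OF g yN]] .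
  then obtain k where "\<forall>k'. k' \<in> carrier G \<and> ap k' y = ap g y \<longrightarrow> k' = k" by (elim ex1E) blast
  then have "g = k" "h = k" using g h e by auto
  then show "g = h" by simp
qed

lemma fix_NC: "g \<in> carrier G \<Longrightarrow> x \<in> NC \<Longrightarrow> ap g x = x \<Longrightarrow> g = \<one>"
proof -
  assume g: "g \<in> carrier G" and x: "x \<in> NC" and fx: "ap g x = x"
  show "g = \<one>"
  proof (cases "(\<forall>x\<in>Pts. ap g x = x) \<and> (\<forall>l\<in>Lns. al g l = l)")
    case True
    then have "ap g y = ap \<one> y" using yPts ap_one by simp
    then show ?thesis using orbit_inj g by simp
  next
    case False
    then have "\<forall>x\<in>Pts. \<not> col P x \<longrightarrow> ap g x \<noteq> x" using elation[OF g] unfolding is_elation_def by auto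
    moreover have "x \<in> Pts" "\<not> col P x" using x NC_iff by auto
    ultimately show ?thesis using fx by blast
  qed
qed

lemma fin_carrier: "finite (carrier G)"
proof -
  have "inj_on (\<lambda>g. ap g y) (carrier G)" using orbit_inj by (auto simp: inj_on_def)
  moreover have "(\<lambda>g. ap g y) ` carrier G \<subseteq> Pts" using ap_Pts yPts by auto
  moreover have "finite ((\<lambda>g. ap g y) ` carrier G)" using finPts calculation(2) by (rule finite_subset[rotated])
  ultimately show ?thesis using finite_imageD by blast
qed

end

context egq
begin

abbreviation Ly where "Ly \<equiv> {M\<in>Lns. inc y M}"
abbreviation zz where "zz M \<equiv> proj_pt Pts Lns inc P M"
abbreviation AA where "AA M \<equiv> fam_A G al M"
abbreviation AS where "AS M \<equiv> fam_Astar Pts Lns inc P G ap M"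

lemma Ly_D: "M \<in> Ly \<Longrightarrow> M \<in> Lns" "M \<in> Ly \<Longrightarrow> inc y M" by auto

lemma P_notin_Ly: "M \<in> Ly \<Longrightarrow> \<not> inc P M"
  using col_intro[of P M y] ync by auto

lemma zz_ex1: "M \<in> Ly \<Longrightarrow> \<exists>!z. z \<in> Pts \<and> inc z M \<and> col P z"
  using gq_ax[OF PinPts Ly_D(1) P_notin_Ly] .

lemma zz_prop: "M \<in> Ly \<Longrightarrow> zz M \<in> Pts \<and> inc (zz M) M \<and> col P (zz M)"
  unfolding proj_pt_def by (rule theI'[OF zz_ex1])

lemma zz_uniq: "M \<in> Ly \<Longrightarrow> z \<in> Pts \<Longrightarrow> inc z M \<Longrightarrow> col P z \<Longrightarrow> z = zz M"
  unfolding proj_pt_def by (rule the1_equality[OF zz_ex1, symmetric]) auto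

lemma zz_ne_y: "M \<in> Ly \<Longrightarrow> zz M \<noteq> y"
  using zz_prop ync by auto

lemma zz_ne_P: "M \<in> Ly \<Longrightarrow> zz M \<noteq> P"
  using zz_prop P_notin_Ly by metis

lemma on_M_NC: "M \<in> Ly \<Longrightarrow> inc x M \<Longrightarrow> x \<noteq> zz M \<Longrightarrow> x \<in> NC"
proof -
  assume M: "M \<in> Ly" and x: "inc x M" "x \<noteq> zz M"
  have xP: "x \<in> Pts" using x inc_in by auto
  have "\<not> col P x" using zz_uniq[OF M xP x(1)] x(2) by blast
  then show ?thesis using xP NC_iff by blast
qed

lemma NC_not_on_P_line: "x \<in> NC \<Longrightarrow> inc P l \<Longrightarrow> \<not> inc x l"
  using NC_iff col_intro by blast

definition LL where "LL M = (SOME l. l \<in> Lns \<and> inc P l \<and> inc (zz M) l)"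

lemma LL_prop: "M \<in> Ly \<Longrightarrow> LL M \<in> Lns \<and> inc P (LL M) \<and> inc (zz M) (LL M)"
proof -
  assume M: "M \<in> Ly"
  have "col P (zz M)" using zz_prop[OF M] by blast
  then obtain l where "l \<in> Lns" "inc P l" "inc (zz M) l" by (rule colE)
  then have "\<exists>l. l \<in> Lns \<and> inc P l \<and> inc (zz M) l" by blast
  then show ?thesis unfolding LL_def by (rule someI_ex)
qed

lemma core:
  assumes g: "g \<in> carrier G" and M: "M \<in> Ly" and c: "col (zz M) (ap g y)"
  shows "ap g (zz M) = zz M"
proof -
  note z = zz_prop[OF M] and L = LL_prop[OF M]
  have uN: "ap g y \<in> NC" using NC_act[OF g yN] .
  have uP: "ap g y \<in> Pts" using uN unfolding noncollinear_pts_def by simp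
  have L1: "LL M \<in> Lns" and L2: "inc P (LL M)" and L3: "inc (zz M) (LL M)" using L by auto
  have fixL: "al g (LL M) = LL M" using al_fix_P[OF g L2] .
  have gz: "inc (ap g (zz M)) (LL M)" using inc_act1[OF g L3] unfolding fixL .
  have zM: "inc (zz M) M" using z by simp
  have yM: "inc y M" using M by simp
  have "col (zz M) y" using col_intro[OF zM yM] .
  then have c2: "col (ap g (zz M)) (ap g y)" by (rule col_act1[OF g])
  have nu: "\<not> inc (ap g y) (LL M)" using NC_not_on_P_line[OF uN L2] .
  show "ap g (zz M) = zz M"
    by (rule gq_uniq[OF uP L1 nu gz L3 col_sym[OF c2] col_sym[OF c]])
qed

lemma AA_iff: "g \<in> AA M \<longleftrightarrow> g \<in> carrier G \<and> al g M = M"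
  unfolding fam_A_def stab_line_def by simp
lemma AS_iff: "g \<in> AS M \<longleftrightarrow> g \<in> carrier G \<and> ap g (zz M) = zz M"
  unfolding fam_Astar_def stab_pt_def by simp

lemma K_A:
  assumes g: "g \<in> carrier G" and M: "M \<in> Ly"
  shows "g \<in> AA M \<longleftrightarrow> inc (ap g y) M"
proof
  have yM: "inc y M" using M by simp
  assume "g \<in> AA M"
  then have "al g M = M" unfolding AA_iff by simp
  then show "inc (ap g y) M" using inc_act1[OF g yM] by simp
next
  have yM: "inc y M" using M by simp
  assume u: "inc (ap g y) M"
  note z = zz_prop[OF M]
  have zM: "inc (zz M) M" using z by simp
  have "col (zz M) (ap g y)" using col_intro[OF zM u] .
  then have gz: "ap g (zz M) = zz M" by (rule core[OF g M])
  have i1: "inc (ap g y) (al g M)" using inc_act1[OF g yM] .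
  have i2: "inc (zz M) (al g M)" using inc_act1[OF g zM] unfolding gz .
  have uN: "ap g y \<in> NC" using NC_act[OF g yN] .
  have ne: "zz M \<noteq> ap g y"
  proof
    assume "zz M = ap g y"
    then have "col P (ap g y)" using z by simp
    then show False using uN unfolding noncollinear_pts_def by simp
  qed
  have "M = al g M" by (rule two_pts[OF ne zM u i2 i1])
  then show "g \<in> AA M" using g unfolding AA_iff by simp
qed

lemma K_AS:
  assumes g: "g \<in> carrier G" and M: "M \<in> Ly"
  shows "g \<in> AS M \<longleftrightarrow> col (zz M) (ap g y)"
proof
  assume "g \<in> AS M"
  then have gz: "ap g (zz M) = zz M" unfolding AS_iff by simp
  have zM: "inc (zz M) M" using zz_prop[OF M] by simp
  have yM: "inc y M" using M by simp
  have "col (zz M) y" using col_intro[OF zM yM] .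
  then have "col (ap g (zz M)) (ap g y)" by (rule col_act1[OF g])
  then show "col (zz M) (ap g y)" unfolding gz .
next
  assume "col (zz M) (ap g y)"
  then have "ap g (zz M) = zz M" by (rule core[OF g M])
  then show "g \<in> AS M" using g unfolding AS_iff by simp
qed

lemma AA_carrier: "AA M \<subseteq> carrier G" using AA_iff by blast
lemma AS_carrier: "AS M \<subseteq> carrier G" using AS_iff by blast

lemma AA_sub_AS: "M \<in> Ly \<Longrightarrow> g \<in> AA M \<Longrightarrow> g \<in> AS M"
proof -
  assume M: "M \<in> Ly" and g: "g \<in> AA M"
  have gc: "g \<in> carrier G" using g unfolding AA_iff by simp
  have u: "inc (ap g y) M" using K_A[OF gc M] g by simp
  have zM: "inc (zz M) M" using zz_prop[OF M] by simp
  have "col (zz M) (ap g y)" using col_intro[OF zM u] .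
  then show ?thesis using K_AS[OF gc M] by simp
qed

lemma AA_one: "M \<in> Lns \<Longrightarrow> \<one> \<in> AA M"
  unfolding AA_iff using al_one by simp
lemma AA_mult: "g \<in> AA M \<Longrightarrow> h \<in> AA M \<Longrightarrow> M \<in> Lns \<Longrightarrow> g \<otimes> h \<in> AA M"
  unfolding AA_iff using al_mult by simp
lemma AA_inv: "g \<in> AA M \<Longrightarrow> M \<in> Lns \<Longrightarrow> inv g \<in> AA M"
proof -
  assume g: "g \<in> AA M" and M: "M \<in> Lns"
  then have gc: "g \<in> carrier G" and e: "al g M = M" unfolding AA_iff by auto
  have "al (inv g) (al g M) = M" using al_inv[OF gc M] .
  then have "al (inv g) M = M" unfolding e .
  then show ?thesis unfolding AA_iff using gc by simp
qed
lemma AS_one: "M \<in> Ly \<Longrightarrow> \<one> \<in> AS M"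
proof -
  assume M: "M \<in> Ly"
  have "zz M \<in> Pts" using zz_prop[OF M] by simp
  then show ?thesis unfolding AS_iff using ap_one by simp
qed
lemma AS_mult: "g \<in> AS M \<Longrightarrow> h \<in> AS M \<Longrightarrow> M \<in> Ly \<Longrightarrow> g \<otimes> h \<in> AS M"
proof -
  assume g: "g \<in> AS M" and h: "h \<in> AS M" and M: "M \<in> Ly"
  have zP: "zz M \<in> Pts" using zz_prop[OF M] by simp
  have gc: "g \<in> carrier G" and hc: "h \<in> carrier G" and eg: "ap g (zz M) = zz M" and eh: "ap h (zz M) = zz M"
    using g h unfolding AS_iff by auto
  have "ap (g \<otimes> h) (zz M) = zz M" using ap_mult[OF gc hc zP] eg eh by simp
  then show ?thesis unfolding AS_iff using gc hc by simp
qed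
lemma AS_inv: "g \<in> AS M \<Longrightarrow> M \<in> Ly \<Longrightarrow> inv g \<in> AS M"
proof -
  assume g: "g \<in> AS M" and M: "M \<in> Ly"
  have zP: "zz M \<in> Pts" using zz_prop[OF M] by simp
  have gc: "g \<in> carrier G" and e: "ap g (zz M) = zz M" using g unfolding AS_iff by auto
  have "ap (inv g) (ap g (zz M)) = zz M" using ap_inv[OF gc zP] .
  then have "ap (inv g) (zz M) = zz M" unfolding e .
  then show ?thesis unfolding AS_iff using gc by simp
qed

lemma y_eq_one: "g \<in> carrier G \<Longrightarrow> ap g y = y \<Longrightarrow> g = \<one>"
proof -
  assume gc: "g \<in> carrier G" and e: "ap g y = y"
  have "ap g y = ap \<one> y" using ap_one[OF yPts] e by simp
  then show ?thesis using orbit_inj[OF gc one_closed] by simp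
qed

lemma AA_int:
  assumes M: "M \<in> Ly" and N: "N \<in> Ly" and MN: "M \<noteq> N" and gM: "g \<in> AA M" and gN: "g \<in> AA N"
  shows "g = \<one>"
proof -
  have gc: "g \<in> carrier G" using gM unfolding AA_iff by simp
  have u1: "inc (ap g y) M" and u2: "inc (ap g y) N" using K_A[OF gc M] K_A[OF gc N] gM gN by auto
  have yM: "inc y M" and yN': "inc y N" using M N by auto
  have "ap g y = y"
  proof (rule ccontr)
    assume ne: "ap g y \<noteq> y"
    have "M = N" by (rule two_pts[OF ne u1 yM u2 yN'])
    then show False using MN by simp
  qed
  then show ?thesis by (rule y_eq_one[OF gc])
qed

lemma AS_AA_int:
  assumes M: "M \<in> Ly" and N: "N \<in> Ly" and MN: "M \<noteq> N" and gM: "g \<in> AS M" and gN: "g \<in> AA N"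
  shows "g = \<one>"
proof -
  have gc: "g \<in> carrier G" using gN unfolding AA_iff by simp
  have u: "inc (ap g y) N" using K_A[OF gc N] gN by auto
  have c: "col (zz M) (ap g y)" using K_AS[OF gc M] gM by auto
  have zM: "inc (zz M) M" and zP: "zz M \<in> Pts" using zz_prop[OF M] by auto
  have yM: "inc y M" and yN': "inc y N" using M N by auto
  have NL: "N \<in> Lns" using N by simp
  have nz: "\<not> inc (zz M) N"
  proof
    assume zN: "inc (zz M) N"
    have "M = N" by (rule two_pts[OF zz_ne_y[OF M] zM yM zN yN'])
    then show False using MN by simp
  qed
  have cy: "col (zz M) y" using col_intro[OF zM yM] .
  have "y = ap g y" by (rule gq_uniq[OF zP NL nz yN' u cy c])
  then show ?thesis using y_eq_one[OF gc] by simp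
qed

end

context egq
begin

lemma card_AA:
  assumes M: "M \<in> Ly"
  shows "card (AA M) = s"
proof -
  let ?T = "{x\<in>Pts. inc x M} - {zz M}"
  have zM: "inc (zz M) M" and zP: "zz M \<in> Pts" and zc: "col P (zz M)" using zz_prop[OF M] by auto
  have MLn: "M \<in> Lns" using M by simp
  have bij: "bij_betw (\<lambda>g. ap g y) (AA M) ?T"
  proof (rule bij_betwI')
    fix g h assume "g \<in> AA M" "h \<in> AA M"
    then have "g \<in> carrier G" "h \<in> carrier G" using AA_iff by auto
    then show "(ap g y = ap h y) = (g = h)" using orbit_inj by auto
  next
    fix g assume g: "g \<in> AA M"
    then have gc: "g \<in> carrier G" using AA_iff by auto
    have uN: "ap g y \<in> NC" using NC_act[OF gc yN] .
    have "ap g y \<noteq> zz M"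
    proof
      assume "ap g y = zz M"
      then have "col P (ap g y)" using zc by simp
      then show False using uN unfolding noncollinear_pts_def by simp
    qed
    moreover have "inc (ap g y) M" using K_A[OF gc M] g by simp
    moreover have "ap g y \<in> Pts" using ap_Pts[OF gc yPts] .
    ultimately show "ap g y \<in> ?T" by simp
  next
    fix x assume x: "x \<in> ?T"
    then have xN: "x \<in> NC" using on_M_NC[OF M] by auto
    obtain g where g: "g \<in> carrier G" "ap g y = x" using regular[OF xN] by blast
    then have "g \<in> AA M" using K_A[OF g(1) M] x by simp
    then show "\<exists>g\<in>AA M. x = ap g y" using g by auto
  qed
  have "card ?T = card {x\<in>Pts. inc x M} - 1"
    using zP zM by (simp add: card_Diff_singleton_if)
  also have "\<dots> = s" using card_line[OF MLn] by simp
  finally show ?thesis using bij_betw_same_card[OF bij] by simp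
qed

lemma LL_distinct:
  assumes M: "M \<in> Ly" and N: "N \<in> Ly" and MN: "M \<noteq> N"
  shows "LL M \<noteq> LL N"
proof
  assume e: "LL M = LL N"
  have L1: "LL M \<in> Lns" "inc P (LL M)" "inc (zz M) (LL M)" using LL_prop[OF M] by auto
  have L2: "inc (zz N) (LL M)" using LL_prop[OF N] e by auto
  have nyL: "\<not> inc y (LL M)" using NC_not_on_P_line[OF yN L1(2)] .
  have zM: "inc (zz M) M" and zN: "inc (zz N) N" using zz_prop M N by auto
  have yM: "inc y M" and yN': "inc y N" using M N by auto
  have c1: "col y (zz M)" using col_intro[OF yM zM] .
  have c2: "col y (zz N)" using col_intro[OF yN' zN] .
  have "zz M = zz N" by (rule gq_uniq[OF yPts L1(1) nyL L1(3) L2 c1 c2])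
  then have zN2: "inc (zz M) N" using zN by simp
  have "M = N" by (rule two_pts[OF zz_ne_y[OF M] zM yM zN2 yN'])
  then show False using MN by simp
qed

lemma card_LLP:
  assumes M: "M \<in> Ly"
  shows "card ({x\<in>Pts. inc x (LL M)} - {P}) = s"
proof -
  have L: "LL M \<in> Lns" "inc P (LL M)" using LL_prop[OF M] by auto
  have "card ({x\<in>Pts. inc x (LL M)} - {P}) = card {x\<in>Pts. inc x (LL M)} - 1"
    using PinPts L by (simp add: card_Diff_singleton_if)
  also have "\<dots> = s" using card_line[OF L(1)] by simp
  finally show ?thesis .
qed

lemma free:
  assumes M: "M \<in> Ly" and N: "N \<in> Ly" and MN: "M \<noteq> N" and v: "v \<in> AA N"
    and w: "w \<in> Pts" "inc w (LL M)" "w \<noteq> P" and fx: "ap v w = w"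
  shows "v = \<one>"
proof -
  have vc: "v \<in> carrier G" and vN: "al v N = N" using v AA_iff by auto
  have LM: "LL M \<in> Lns" "inc P (LL M)" "inc (zz M) (LL M)" using LL_prop[OF M] by auto
  have LN: "LL N \<in> Lns" "inc P (LL N)" "inc (zz N) (LL N)" using LL_prop[OF N] by auto
  have dL: "LL M \<noteq> LL N" using LL_distinct[OF M N MN] .
  have NL: "N \<in> Lns" using N by simp
  have zN: "zz N \<in> Pts" "inc (zz N) N" "col P (zz N)" using zz_prop[OF N] by auto
  have a: "w \<noteq> zz N"
  proof
    assume "w = zz N"
    then have "inc w (LL N)" using LN by simp
    then have "LL M = LL N" using two_pts[OF w(3) w(2) LM(2)] LN(2) by blast
    then show False using dL by simp
  qed
  have b: "\<not> inc w N"
  proof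
    assume wN: "inc w N"
    have "col P w" using col_intro[OF LM(2) w(2)] .
    then have "w = zz N" using zz_uniq[OF N w(1) wN] by simp
    then show False using a by simp
  qed
  obtain p where p: "p \<in> Pts" "inc p N" "col w p" using gq_ax[OF w(1) NL b] by blast
  have d: "p \<noteq> zz N"
  proof
    assume pz: "p = zz N"
    have nz: "\<not> inc (zz N) (LL M)"
    proof
      assume "inc (zz N) (LL M)"
      then have "LL M = LL N" using two_pts[OF zz_ne_P[OF N] _ LM(2) LN(3) LN(2)] by blast
      then show False using dL by simp
    qed
    have c1: "col (zz N) P" using col_sym[OF zN(3)] .
    have c2: "col (zz N) w" using col_sym p(3) pz by simp
    have "P = w" by (rule gq_uniq[OF zN(1) LM(1) nz LM(2) w(2) c1 c2])
    then show False using w(3) by simp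
  qed
  have pN: "p \<in> NC" using on_M_NC[OF N p(2) d] .
  have i: "inc (ap v p) N" using inc_act1[OF vc p(2)] unfolding vN .
  have c: "col w (ap v p)" using col_act1[OF vc p(3)] unfolding fx .
  have "p = ap v p" by (rule gq_uniq[OF w(1) NL b p(2) i p(3) c])
  then show ?thesis using fix_NC[OF vc pN] by simp
qed

lemma I2:
  assumes M: "M \<in> Ly" and N: "N \<in> Ly" and MN: "M \<noteq> N" and g: "g \<in> carrier G"
  shows "card {v\<in>AA N. g \<otimes> inv v \<in> AS M} = 1"
proof -
  define z where "z = zz M"
  define w where "w = ap (inv g) z"
  have zP: "z \<in> Pts" using zz_prop[OF M] z_def by simp
  have LM: "LL M \<in> Lns" "inc P (LL M)" "inc z (LL M)" using LL_prop[OF M] z_def by auto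
  have zneP: "z \<noteq> P" using zz_ne_P[OF M] z_def by simp
  have ig: "inv g \<in> carrier G" using g by simp
  have wP: "w \<in> Pts" using ap_Pts[OF ig zP] w_def by simp
  have wL: "inc w (LL M)" using inc_act1[OF ig LM(3)] al_fix_P[OF ig LM(2)] w_def by simp
  have gw: "ap g w = z" using ap_inv2[OF g zP] w_def by simp
  have wneP: "w \<noteq> P"
  proof
    assume "w = P"
    then have "ap g w = P" using ap_P[OF g] by simp
    then show False using gw zneP by simp
  qed
  have seteq: "{v\<in>AA N. g \<otimes> inv v \<in> AS M} = {v\<in>AA N. ap v w = z}"
  proof (rule Collect_cong, rule conj_cong[OF refl])
    fix v assume v: "v \<in> AA N"
    then have vc: "v \<in> carrier G" using AA_iff by auto
    have iv: "inv v \<in> carrier G" using vc by simp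
    have hc: "g \<otimes> inv v \<in> carrier G" using g iv by simp
    have "g \<otimes> inv v \<in> AS M \<longleftrightarrow> ap (g \<otimes> inv v) z = z" using hc AS_iff z_def by simp
    also have "ap (g \<otimes> inv v) z = ap g (ap (inv v) z)" using ap_mult[OF g iv zP] .
    also have "(ap g (ap (inv v) z) = z) \<longleftrightarrow> ap (inv v) z = w"
    proof
      assume e: "ap g (ap (inv v) z) = z"
      have "ap (inv g) (ap g (ap (inv v) z)) = ap (inv v) z" using ap_inv[OF g ap_Pts[OF iv zP]] .
      then show "ap (inv v) z = w" using e w_def by simp
    next
      assume "ap (inv v) z = w"
      then show "ap g (ap (inv v) z) = z" using gw by simp
    qed
    also have "\<dots> \<longleftrightarrow> ap v w = z"
    proof
      assume "ap (inv v) z = w"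
      then show "ap v w = z" using ap_inv2[OF vc zP] by simp
    next
      assume "ap v w = z"
      then show "ap (inv v) z = w" using ap_inv[OF vc wP] by simp
    qed
    finally show "g \<otimes> inv v \<in> AS M \<longleftrightarrow> ap v w = z" .
  qed
  let ?T = "{x\<in>Pts. inc x (LL M)} - {P}"
  have NL: "N \<in> Lns" using N by simp
  have inj: "inj_on (\<lambda>v. ap v w) (AA N)"
  proof (rule inj_onI)
    fix v v' assume v: "v \<in> AA N" and v': "v' \<in> AA N" and e: "ap v w = ap v' w"
    have vc: "v \<in> carrier G" and v'c: "v' \<in> carrier G" using v v' AA_iff by auto
    have k: "inv v' \<otimes> v \<in> AA N" using AA_mult[OF AA_inv[OF v' NL] v NL] .
    have "ap (inv v' \<otimes> v) w = ap (inv v') (ap v w)" using ap_mult[OF _ vc wP] v'c by simp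
    also have "\<dots> = w" using e ap_inv[OF v'c wP] by simp
    finally have "inv v' \<otimes> v = \<one>" using free[OF M N MN k wP wL wneP] by simp
    then show "v = v'" using vc v'c by (metis inv_equality inv_inv inv_closed)
  qed
  have img: "(\<lambda>v. ap v w) ` AA N \<subseteq> ?T"
  proof
    fix x assume "x \<in> (\<lambda>v. ap v w) ` AA N"
    then obtain v where v: "v \<in> AA N" and x: "x = ap v w" by blast
    have vc: "v \<in> carrier G" using v AA_iff by auto
    have "x \<in> Pts" using ap_Pts[OF vc wP] x by simp
    moreover have "inc x (LL M)" using inc_act1[OF vc wL] al_fix_P[OF vc LM(2)] x by simp
    moreover have "x \<noteq> P"
    proof
      assume "x = P"
      then have "ap v w = ap v P" using ap_P[OF vc] x by simp
      then have "w = P" using ap_inj[OF vc wP PinPts] by simp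
      then show False using wneP by simp
    qed
    ultimately show "x \<in> ?T" by simp
  qed
  have finT: "finite ?T" using finPts by simp
  have "card ((\<lambda>v. ap v w) ` AA N) = s" using card_image[OF inj] card_AA[OF N] by simp
  then have imgeq: "(\<lambda>v. ap v w) ` AA N = ?T"
    using card_subset_eq[OF finT img] card_LLP[OF M] by simp
  have "z \<in> ?T" using zP LM(3) zneP by simp
  then obtain v0 where v0: "v0 \<in> AA N" "ap v0 w = z" using imgeq by (metis (no_types, lifting) imageE)
  have "{v\<in>AA N. ap v w = z} = {v0}"
  proof
    show "{v0} \<subseteq> {v\<in>AA N. ap v w = z}" using v0 by simp
    show "{v\<in>AA N. ap v w = z} \<subseteq> {v0}"
    proof
      fix v assume "v \<in> {v\<in>AA N. ap v w = z}"
      then have "v \<in> AA N" "ap v w = ap v0 w" using v0 by auto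
      then show "v \<in> {v0}" using inj v0(1) unfolding inj_on_def by blast
    qed
  qed
  then show ?thesis using seteq by simp
qed

lemma G9:
  assumes N: "N \<in> Ly" and g: "g \<in> carrier G" and gN: "g \<notin> AS N"
  shows "card {v\<in>AA N. \<exists>M\<in>Ly. g \<otimes> inv v \<in> AA M} = 1"
proof -
  define w where "w = ap (inv g) y"
  have ig: "inv g \<in> carrier G" using g by simp
  have wN: "w \<in> NC" using NC_act[OF ig yN] w_def by simp
  have wP: "w \<in> Pts" using wN unfolding noncollinear_pts_def by simp
  have gw: "ap g w = y" using ap_inv2[OF g yPts] w_def by simp
  have NL: "N \<in> Lns" using N by simp
  have seteq: "{v\<in>AA N. \<exists>M\<in>Ly. g \<otimes> inv v \<in> AA M} = {v\<in>AA N. col w (ap (inv v) y)}"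
  proof (rule Collect_cong, rule conj_cong[OF refl])
    fix v assume v: "v \<in> AA N"
    then have vc: "v \<in> carrier G" using AA_iff by auto
    have iv: "inv v \<in> carrier G" using vc by simp
    have hc: "g \<otimes> inv v \<in> carrier G" using g iv by simp
    have XP: "ap (inv v) y \<in> Pts" using ap_Pts[OF iv yPts] .
    have hy: "ap (g \<otimes> inv v) y = ap g (ap (inv v) y)" using ap_mult[OF g iv yPts] .
    have "(\<exists>M\<in>Ly. g \<otimes> inv v \<in> AA M) \<longleftrightarrow> (\<exists>M\<in>Ly. inc (ap (g \<otimes> inv v) y) M)"
      using K_A[OF hc] by blast
    also have "\<dots> \<longleftrightarrow> col y (ap (g \<otimes> inv v) y)"
    proof
      assume "\<exists>M\<in>Ly. inc (ap (g \<otimes> inv v) y) M"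
      then obtain M where "M \<in> Ly" "inc (ap (g \<otimes> inv v) y) M" by blast
      then show "col y (ap (g \<otimes> inv v) y)" using col_intro[of y M] by blast
    next
      assume "col y (ap (g \<otimes> inv v) y)"
      then obtain l where "l \<in> Lns" "inc y l" "inc (ap (g \<otimes> inv v) y) l" by (rule colE)
      then show "\<exists>M\<in>Ly. inc (ap (g \<otimes> inv v) y) M" by blast
    qed
    also have "\<dots> \<longleftrightarrow> col (ap g w) (ap g (ap (inv v) y))" using hy gw by simp
    also have "\<dots> \<longleftrightarrow> col w (ap (inv v) y)" using col_act[OF g wP XP] .
    finally show "(\<exists>M\<in>Ly. g \<otimes> inv v \<in> AA M) \<longleftrightarrow> col w (ap (inv v) y)" .
  qed
  have nwN: "\<not> inc w N"
  proof
    assume "inc w N"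
    then have "inv g \<in> AA N" using K_A[OF ig N] w_def by simp
    then have "inv (inv g) \<in> AA N" using AA_inv NL by blast
    then have "g \<in> AA N" using g by simp
    then show False using AA_sub_AS[OF N] gN by blast
  qed
  obtain p where p: "p \<in> Pts" "inc p N" "col w p" using gq_ax[OF wP NL nwN] by blast
  have pz: "p \<noteq> zz N"
  proof
    assume "p = zz N"
    then have "col (zz N) (ap (inv g) y)" using col_sym[OF p(3)] w_def by simp
    then have "inv g \<in> AS N" using K_AS[OF ig N] by simp
    then have "inv (inv g) \<in> AS N" using AS_inv N by blast
    then show False using gN g by simp
  qed
  have pN: "p \<in> NC" using on_M_NC[OF N p(2) pz] .
  obtain u where u: "u \<in> carrier G" "ap u y = p" using regular[OF pN] by blast
  have uA: "u \<in> AA N" using K_A[OF u(1) N] u p by simp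
  have "{v\<in>AA N. col w (ap (inv v) y)} = {inv u}"
  proof
    show "{inv u} \<subseteq> {v\<in>AA N. col w (ap (inv v) y)}"
      using AA_inv[OF uA NL] u p by simp
    show "{v\<in>AA N. col w (ap (inv v) y)} \<subseteq> {inv u}"
    proof
      fix v assume v: "v \<in> {v\<in>AA N. col w (ap (inv v) y)}"
      then have vA: "v \<in> AA N" and c: "col w (ap (inv v) y)" by auto
      have vc: "v \<in> carrier G" using vA AA_iff by auto
      have ivA: "inv v \<in> AA N" using AA_inv[OF vA NL] .
      have iv: "inv v \<in> carrier G" using vc by simp
      have i: "inc (ap (inv v) y) N" using K_A[OF iv N] ivA by simp
      have "ap (inv v) y = p" by (rule gq_uniq[OF wP NL nwN i p(2) c p(3)])
      then have "inv v = u" using orbit_inj[OF iv u(1)] u(2) by simp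
      then have "v = inv u" using vc by (metis inv_inv)
      then show "v \<in> {inv u}" by simp
    qed
  qed
  then show ?thesis using seteq by simp
qed

end

definition indc :: "'g set \<Rightarrow> 'g \<Rightarrow> complex" where
  "indc A = (\<lambda>g. if g \<in> A then 1 else 0)"

lemma card_as_sum: "finite A \<Longrightarrow> card {x\<in>A. Q x} = (\<Sum>x\<in>A. if Q x then 1 else 0)"
  by (simp add: sum.If_cases Int_def conj_commute)

context egq
begin

lemma conv_ind:
  assumes K: "K \<subseteq> carrier G"
  shows "conv G (indc H) (indc K) g = of_nat (card {v\<in>K. g \<otimes> inv v \<in> H})"
proof -
  have "conv G (indc H) (indc K) g = (\<Sum>v\<in>carrier G. if v \<in> K \<and> g \<otimes> inv v \<in> H then 1 else 0)"
    unfolding conv_def indc_def by (intro sum.cong refl) auto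
  also have "\<dots> = of_nat (card {v\<in>carrier G. v \<in> K \<and> g \<otimes> inv v \<in> H})"
    using fin_carrier by (subst card_as_sum) (auto simp: of_nat_sum intro!: sum.cong)
  also have "{v\<in>carrier G. v \<in> K \<and> g \<otimes> inv v \<in> H} = {v\<in>K. g \<otimes> inv v \<in> H}" using K by auto
  finally show ?thesis .
qed

lemma conv_sum_left: "finite I \<Longrightarrow> conv G (\<lambda>g. \<Sum>i\<in>I. f i g) h g = (\<Sum>i\<in>I. conv G (f i) h g)"
  unfolding conv_def by (simp add: sum_distrib_right) (rule sum.swap)

lemma conv_sum_right: "finite I \<Longrightarrow> conv G f (\<lambda>g. \<Sum>i\<in>I. h i g) g = (\<Sum>i\<in>I. conv G f (h i) g)"
  unfolding conv_def by (simp add: sum_distrib_left) (rule sum.swap)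

lemma card_sub:
  assumes Hc: "H \<subseteq> carrier G" and Hm: "\<And>a b. a \<in> H \<Longrightarrow> b \<in> H \<Longrightarrow> a \<otimes> b \<in> H"
    and Hi: "\<And>a. a \<in> H \<Longrightarrow> inv a \<in> H" and KH: "K \<subseteq> H" and g: "g \<in> carrier G"
  shows "card {v\<in>K. g \<otimes> inv v \<in> H} = (if g \<in> H then card K else 0)"
proof (cases "g \<in> H")
  case True
  have E: "{v\<in>K. g \<otimes> inv v \<in> H} = K" using True KH Hm Hi by auto
  show ?thesis unfolding E using True by simp
next
  case False
  have E: "{v\<in>K. g \<otimes> inv v \<in> H} = {}"
  proof (rule ccontr)
    assume "{v\<in>K. g \<otimes> inv v \<in> H} \<noteq> {}"
    then obtain v where v: "v \<in> K" "g \<otimes> inv v \<in> H" by blast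
    have vc: "v \<in> carrier G" using v KH Hc by auto
    have "(g \<otimes> inv v) \<otimes> v \<in> H" using Hm[OF v(2)] v KH by auto
    also have "(g \<otimes> inv v) \<otimes> v = g" using g vc by (simp add: m_assoc)
    finally show False using False by simp
  qed
  show ?thesis unfolding E using False by simp
qed

lemma finLy: "finite Ly" using finLns by simp
lemma cardLy: "card Ly = t + 1" using card_pt[OF yPts] by simp
lemma finAA: "finite (AA N)" using fin_carrier AA_carrier finite_subset by blast

lemma diagAA:
  assumes N: "N \<in> Ly" and g: "g \<in> carrier G"
  shows "card {v\<in>AA N. g \<otimes> inv v \<in> AA N} = (if g \<in> AA N then s else 0)"
proof -
  have NL: "N \<in> Lns" using N by simp
  have "card {v\<in>AA N. g \<otimes> inv v \<in> AA N} = (if g \<in> AA N then card (AA N) else 0)"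
    by (rule card_sub[OF AA_carrier]) (use AA_mult[OF _ _ NL] AA_inv[OF _ NL] g in auto)
  then show ?thesis using card_AA[OF N] by simp
qed

lemma diagAS:
  assumes N: "N \<in> Ly" and g: "g \<in> carrier G"
  shows "card {v\<in>AA N. g \<otimes> inv v \<in> AS N} = (if g \<in> AS N then s else 0)"
proof -
  have "card {v\<in>AA N. g \<otimes> inv v \<in> AS N} = (if g \<in> AS N then card (AA N) else 0)"
    by (rule card_sub[OF AS_carrier]) (use AS_mult[OF _ _ N] AS_inv[OF _ N] AA_sub_AS[OF N] g in auto)
  then show ?thesis using card_AA[OF N] by simp
qed

lemma swap_count:
  "(\<Sum>M\<in>Ly - {N}. card {v\<in>AA N. Q M v}) = (\<Sum>v\<in>AA N. card {M\<in>Ly - {N}. Q M v})"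
proof -
  have "(\<Sum>M\<in>Ly - {N}. card {v\<in>AA N. Q M v}) = (\<Sum>M\<in>Ly - {N}. \<Sum>v\<in>AA N. if Q M v then 1 else 0)"
    using finAA by (simp add: card_as_sum)
  also have "\<dots> = (\<Sum>v\<in>AA N. \<Sum>M\<in>Ly - {N}. if Q M v then 1 else 0)" by (rule sum.swap)
  also have "\<dots> = (\<Sum>v\<in>AA N. card {M\<in>Ly - {N}. Q M v})"
  proof (rule sum.cong[OF refl])
    fix v
    have "finite (Ly - {N})" using finLy by simp
    then show "(\<Sum>M\<in>Ly - {N}. if Q M v then 1 else 0) = card {M\<in>Ly - {N}. Q M v}"
      by (rule card_as_sum[symmetric])
  qed
  finally show ?thesis .
qed

lemma offdiag:
  assumes N: "N \<in> Ly" and g: "g \<in> carrier G"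
  shows "(\<Sum>M\<in>Ly - {N}. card {v\<in>AA N. g \<otimes> inv v \<in> AA M}) + (if g \<in> AS N then 1 else 0)
       = t * (if g \<in> AA N then 1 else 0) + 1"
proof -
  have NL: "N \<in> Lns" using N by simp
  have S: "(\<Sum>M\<in>Ly - {N}. card {v\<in>AA N. g \<otimes> inv v \<in> AA M}) = (\<Sum>v\<in>AA N. card {M\<in>Ly - {N}. g \<otimes> inv v \<in> AA M})"
    by (rule swap_count)
  have cLN: "card (Ly - {N}) = t" using cardLy N by (simp add: card_Diff_singleton_if)
  show ?thesis
  proof (cases "g \<in> AA N")
    case True
    have each: "card {M\<in>Ly - {N}. g \<otimes> inv v \<in> AA M} = (if v = g then t else 0)" if v: "v \<in> AA N" for v
    proof (cases "v = g")
      case True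
      then have "g \<otimes> inv v = \<one>" using g by simp
      then have E: "{M\<in>Ly - {N}. g \<otimes> inv v \<in> AA M} = Ly - {N}" using AA_one by auto
      show ?thesis unfolding E using True cLN by simp
    next
      case False
      have vc: "v \<in> carrier G" using v AA_iff by auto
      have hA: "g \<otimes> inv v \<in> AA N" using AA_mult[OF \<open>g \<in> AA N\<close> AA_inv[OF v NL] NL] .
      have h1: "g \<otimes> inv v \<noteq> \<one>"
      proof
        assume "g \<otimes> inv v = \<one>"
        then have "g = v" using g vc by (metis inv_equality inv_inv inv_closed)
        then show False using False by simp
      qed
      have E: "{M\<in>Ly - {N}. g \<otimes> inv v \<in> AA M} = {}"
        using AA_int[OF _ N _ _ hA] h1 by blast
      show ?thesis unfolding E using False by simp
    qed
    have "(\<Sum>v\<in>AA N. card {M\<in>Ly - {N}. g \<otimes> inv v \<in> AA M}) = (\<Sum>v\<in>AA N. if v = g then t else 0)"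
      using each by (rule sum.cong[OF refl])
    also have "\<dots> = t" using True finAA by simp
    finally show ?thesis using S True AA_sub_AS[OF N True] by simp
  next
    case nA: False
    show ?thesis
    proof (cases "g \<in> AS N")
      case True
      have each: "card {M\<in>Ly - {N}. g \<otimes> inv v \<in> AA M} = 0" if v: "v \<in> AA N" for v
      proof -
        have vc: "v \<in> carrier G" using v AA_iff by auto
        have hS: "g \<otimes> inv v \<in> AS N" using AS_mult[OF True AS_inv[OF AA_sub_AS[OF N v] N] N] .
        have h1: "g \<otimes> inv v \<noteq> \<one>"
        proof
          assume "g \<otimes> inv v = \<one>"
          then have "g = v" using g vc by (metis inv_equality inv_inv inv_closed)
          then show False using nA v by simp
        qed
        have E: "{M\<in>Ly - {N}. g \<otimes> inv v \<in> AA M} = {}"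
          using AS_AA_int[OF N _ _ hS] h1 by blast
        show ?thesis unfolding E by simp
      qed
      have "(\<Sum>v\<in>AA N. card {M\<in>Ly - {N}. g \<otimes> inv v \<in> AA M}) = 0" using each by simp
      then show ?thesis using S True nA by simp
    next
      case nS: False
      have each: "card {M\<in>Ly - {N}. g \<otimes> inv v \<in> AA M} = (if \<exists>M\<in>Ly. g \<otimes> inv v \<in> AA M then 1 else 0)"
        if v: "v \<in> AA N" for v
      proof -
        have vc: "v \<in> carrier G" using v AA_iff by auto
        have hS: "g \<otimes> inv v \<notin> AS N"
        proof
          assume "g \<otimes> inv v \<in> AS N"
          then have "(g \<otimes> inv v) \<otimes> v \<in> AS N" using AS_mult[OF _ AA_sub_AS[OF N v] N] by blast
          also have "(g \<otimes> inv v) \<otimes> v = g" using g vc by (simp add: m_assoc)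
          finally show False using nS by simp
        qed
        have hA: "g \<otimes> inv v \<notin> AA N" using hS AA_sub_AS[OF N] by blast
        have h1: "g \<otimes> inv v \<noteq> \<one>" using hS AS_one[OF N] by auto
        have eq: "{M\<in>Ly - {N}. g \<otimes> inv v \<in> AA M} = {M\<in>Ly. g \<otimes> inv v \<in> AA M}" using hA by auto
        show ?thesis
        proof (cases "\<exists>M\<in>Ly. g \<otimes> inv v \<in> AA M")
          case True
          then obtain M0 where M0: "M0 \<in> Ly" "g \<otimes> inv v \<in> AA M0" by blast
          have E: "{M\<in>Ly. g \<otimes> inv v \<in> AA M} = {M0}"
            using M0 AA_int[OF _ M0(1) _ _ M0(2)] h1 by blast
          show ?thesis unfolding eq E using True by simp
        next
          case False
          then have E: "{M\<in>Ly. g \<otimes> inv v \<in> AA M} = {}" by blast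
          show ?thesis unfolding eq E using False by simp
        qed
      qed
      have "(\<Sum>v\<in>AA N. card {M\<in>Ly - {N}. g \<otimes> inv v \<in> AA M}) = (\<Sum>v\<in>AA N. if \<exists>M\<in>Ly. g \<otimes> inv v \<in> AA M then 1 else 0)"
        using each by (rule sum.cong[OF refl])
      also have "\<dots> = card {v\<in>AA N. \<exists>M\<in>Ly. g \<otimes> inv v \<in> AA M}" using finAA by (simp add: card_as_sum)
      also have "\<dots> = 1" using G9[OF N g nS] .
      finally show ?thesis using S nS nA by simp
    qed
  qed
qed

lemma offdiagS:
  assumes N: "N \<in> Ly" and g: "g \<in> carrier G"
  shows "(\<Sum>M\<in>Ly. card {v\<in>AA N. g \<otimes> inv v \<in> AS M}) = t + s * (if g \<in> AS N then 1 else 0)"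
proof -
  have "(\<Sum>M\<in>Ly. card {v\<in>AA N. g \<otimes> inv v \<in> AS M}) =
      card {v\<in>AA N. g \<otimes> inv v \<in> AS N} + (\<Sum>M\<in>Ly - {N}. card {v\<in>AA N. g \<otimes> inv v \<in> AS M})"
    using N finLy by (simp add: sum.remove)
  also have "(\<Sum>M\<in>Ly - {N}. card {v\<in>AA N. g \<otimes> inv v \<in> AS M}) = (\<Sum>M\<in>Ly - {N}. 1)"
    by (rule sum.cong[OF refl]) (use I2 N g in auto)
  also have "\<dots> = t" using cardLy N by (simp add: card_Diff_singleton_if)
  finally show ?thesis using diagAS[OF N g] by simp
qed

end

context egq
begin

definition aF where "aF = (\<lambda>g. \<Sum>M\<in>Ly. indc (AA M) g)"
definition asF where "asF = (\<lambda>g. \<Sum>M\<in>Ly. indc (AS M) g)"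

lemma conv_pairs:
  "conv G (\<lambda>g. \<Sum>M\<in>Ly. indc (H M) g) aF g = (\<Sum>N\<in>Ly. \<Sum>M\<in>Ly. of_nat (card {v\<in>AA N. g \<otimes> inv v \<in> H M}))"
proof -
  have "conv G (\<lambda>g. \<Sum>M\<in>Ly. indc (H M) g) aF g = (\<Sum>M\<in>Ly. conv G (indc (H M)) aF g)"
    using finLy by (rule conv_sum_left)
  also have "\<dots> = (\<Sum>M\<in>Ly. \<Sum>N\<in>Ly. conv G (indc (H M)) (indc (AA N)) g)"
    unfolding aF_def using finLy by (intro sum.cong refl) (rule conv_sum_right)
  also have "\<dots> = (\<Sum>M\<in>Ly. \<Sum>N\<in>Ly. of_nat (card {v\<in>AA N. g \<otimes> inv v \<in> H M}))"
    by (intro sum.cong refl) (rule conv_ind[OF AA_carrier])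
  also have "\<dots> = (\<Sum>N\<in>Ly. \<Sum>M\<in>Ly. of_nat (card {v\<in>AA N. g \<otimes> inv v \<in> H M}))"
    by (rule sum.swap)
  finally show ?thesis .
qed

lemma conv_aa:
  assumes g: "g \<in> carrier G"
  shows "conv G aF aF g = of_nat (s + t) * aF g + of_nat (t + 1) - asF g"
proof -
  have inner: "(\<Sum>M\<in>Ly. of_nat (card {v\<in>AA N. g \<otimes> inv v \<in> AA M}) :: complex)
      = of_nat (s + t) * indc (AA N) g + 1 - indc (AS N) g" if N: "N \<in> Ly" for N
  proof -
    have "(\<Sum>M\<in>Ly. of_nat (card {v\<in>AA N. g \<otimes> inv v \<in> AA M}) :: complex)
        = of_nat (card {v\<in>AA N. g \<otimes> inv v \<in> AA N}) + (\<Sum>M\<in>Ly - {N}. of_nat (card {v\<in>AA N. g \<otimes> inv v \<in> AA M}))"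
      using N finLy by (simp add: sum.remove)
    also have "(\<Sum>M\<in>Ly - {N}. of_nat (card {v\<in>AA N. g \<otimes> inv v \<in> AA M}) :: complex)
        = of_nat (\<Sum>M\<in>Ly - {N}. card {v\<in>AA N. g \<otimes> inv v \<in> AA M})" by simp
    also have "\<dots> = of_nat (t * (if g \<in> AA N then 1 else 0) + 1) - of_nat (if g \<in> AS N then 1 else 0)"
      using arg_cong[OF offdiag[OF N g], of "of_nat :: nat \<Rightarrow> complex"] by (simp add: algebra_simps)
    finally have F: "(\<Sum>M\<in>Ly. of_nat (card {v\<in>AA N. g \<otimes> inv v \<in> AA M}) :: complex) =
       of_nat (card {v\<in>AA N. g \<otimes> inv v \<in> AA N}) + (of_nat (t * (if g \<in> AA N then 1 else 0) + 1) - of_nat (if g \<in> AS N then 1 else 0))" .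
    show ?thesis using F diagAA[OF N g] unfolding indc_def
      by (cases "g \<in> AA N"; cases "g \<in> AS N") (simp_all add: algebra_simps)
  qed
  have "conv G aF aF g = (\<Sum>N\<in>Ly. of_nat (s + t) * indc (AA N) g + 1 - indc (AS N) g)"
    using conv_pairs[of AA g] inner unfolding aF_def[symmetric] by simp
  also have "\<dots> = of_nat (s + t) * aF g + of_nat (t + 1) - asF g"
    unfolding aF_def asF_def using cardLy by (simp add: sum.distrib sum_subtractf sum_distrib_left)
  finally show ?thesis .
qed

lemma conv_sa:
  assumes g: "g \<in> carrier G"
  shows "conv G asF aF g = of_nat s * asF g + of_nat (t * (t + 1))"
proof -
  have inner: "(\<Sum>M\<in>Ly. of_nat (card {v\<in>AA N. g \<otimes> inv v \<in> AS M}) :: complex)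
      = of_nat s * indc (AS N) g + of_nat t" if N: "N \<in> Ly" for N
  proof -
    have "(\<Sum>M\<in>Ly. of_nat (card {v\<in>AA N. g \<otimes> inv v \<in> AS M}) :: complex)
       = of_nat (\<Sum>M\<in>Ly. card {v\<in>AA N. g \<otimes> inv v \<in> AS M})" by simp
    also have "\<dots> = of_nat (t + s * (if g \<in> AS N then 1 else 0))" using offdiagS[OF N g] by simp
    finally show ?thesis unfolding indc_def by (simp add: algebra_simps)
  qed
  have "conv G asF aF g = (\<Sum>N\<in>Ly. of_nat s * indc (AS N) g + of_nat t)"
    using conv_pairs[of AS g] inner unfolding asF_def by simp
  also have "\<dots> = of_nat s * asF g + of_nat (t * (t + 1))"
    unfolding asF_def using cardLy by (simp add: sum.distrib sum_distrib_left algebra_simps)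
  finally show ?thesis .
qed

lemma conv_AA_self:
  assumes N: "N \<in> Ly" and g: "g \<in> carrier G"
  shows "conv G (indc (AA N)) (indc (AA N)) g = of_nat s * indc (AA N) g"
  using conv_ind[OF AA_carrier, of "AA N" N g] diagAA[OF N g] unfolding indc_def by simp

end

context repG
begin

lemma rhat_lin1:
  assumes z: "rhat G n \<rho> (\<lambda>_. 1) = 0\<^sub>m n n"
  shows "rhat G n \<rho> (\<lambda>g. c * f g + d - h g) = c \<cdot>\<^sub>m rhat G n \<rho> f - rhat G n \<rho> h"
proof (rule eq_matI)
  fix i j assume "i < dim_row (c \<cdot>\<^sub>m rhat G n \<rho> f - rhat G n \<rho> h)" "j < dim_col (c \<cdot>\<^sub>m rhat G n \<rho> f - rhat G n \<rho> h)"
  then have i: "i < n" and j: "j < n" by auto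
  have z0: "(\<Sum>g\<in>carrier G. \<rho> g $$ (i,j)) = 0"
    using arg_cong[OF z, of "\<lambda>A. A $$ (i,j)"] i j by (simp add: rhat_index)
  have "rhat G n \<rho> (\<lambda>g. c * f g + d - h g) $$ (i,j)
      = c * (\<Sum>g\<in>carrier G. f g * \<rho> g $$ (i,j)) + d * (\<Sum>g\<in>carrier G. \<rho> g $$ (i,j)) - (\<Sum>g\<in>carrier G. h g * \<rho> g $$ (i,j))"
    using i j by (simp add: rhat_index algebra_simps sum.distrib sum_subtractf sum_distrib_left)
  then show "rhat G n \<rho> (\<lambda>g. c * f g + d - h g) $$ (i,j) = (c \<cdot>\<^sub>m rhat G n \<rho> f - rhat G n \<rho> h) $$ (i,j)"
    using i j z0 by (simp add: rhat_index)
qed auto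

lemma rhat_lin2:
  assumes z: "rhat G n \<rho> (\<lambda>_. 1) = 0\<^sub>m n n"
  shows "rhat G n \<rho> (\<lambda>g. c * f g + d) = c \<cdot>\<^sub>m rhat G n \<rho> f"
proof (rule eq_matI)
  fix i j assume "i < dim_row (c \<cdot>\<^sub>m rhat G n \<rho> f)" "j < dim_col (c \<cdot>\<^sub>m rhat G n \<rho> f)"
  then have i: "i < n" and j: "j < n" by auto
  have z0: "(\<Sum>g\<in>carrier G. \<rho> g $$ (i,j)) = 0"
    using arg_cong[OF z, of "\<lambda>A. A $$ (i,j)"] i j by (simp add: rhat_index)
  have "rhat G n \<rho> (\<lambda>g. c * f g + d) $$ (i,j)
      = c * (\<Sum>g\<in>carrier G. f g * \<rho> g $$ (i,j)) + d * (\<Sum>g\<in>carrier G. \<rho> g $$ (i,j))"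
    using i j by (simp add: rhat_index algebra_simps sum.distrib sum_distrib_left)
  then show "rhat G n \<rho> (\<lambda>g. c * f g + d) $$ (i,j) = (c \<cdot>\<^sub>m rhat G n \<rho> f) $$ (i,j)"
    using i j z0 by (simp add: rhat_index)
qed auto

end

lemma mat_trace_lin:
  fixes A B :: "complex mat"
  assumes "A \<in> carrier_mat n n" "B \<in> carrier_mat n n"
  shows "mat_trace (c \<cdot>\<^sub>m A - B) = c * mat_trace A - mat_trace B"
  using assms unfolding mat_trace_def by (simp add: sum_subtractf sum_distrib_left)

lemma mat_trace_one: "mat_trace (1\<^sub>m n :: complex mat) = of_nat n"
  unfolding mat_trace_def by simp

theorem proposition2p6:
  fixes Pts :: "'p set" and Lns :: "'l set" and inc :: "'p \<Rightarrow> 'l \<Rightarrow> bool"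
    and s t :: nat and P y :: 'p
    and G :: "('g, 'm) monoid_scheme" and ap :: "'g \<Rightarrow> 'p \<Rightarrow> 'p" and al :: "'g \<Rightarrow> 'l \<Rightarrow> 'l"
    and \<chi> :: "'g \<Rightarrow> complex"
  assumes "is_EGQ Pts Lns inc s t P G ap al"
    and "y \<in> noncollinear_pts Pts Lns inc P"
    and "irreducible_character G \<chi>"
    and "nonlinear_character G \<chi>"
  shows "(\<exists>\<omega>::nat. char_ext G \<chi> (elem_S Pts Lns inc s P G ap al y)
                    = of_nat (s * (s + t)) * of_nat \<omega>) \<and>
         (\<exists>z::nat. char_ext G \<chi> (elem_T Pts Lns inc t P G ap al y)
                    = of_nat ((s + t) * s * t) / of_nat (gcd s t) * of_nat z)"
proof -
  interpret E: egq Pts Lns inc s t P y G ap al using assms(1,2) by unfold_locales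
  obtain n \<rho> where irr: "irreducible_rep G n \<rho>" and chi: "\<forall>g\<in>carrier G. \<chi> g = mat_trace (\<rho> g)"
    using assms(3) unfolding irreducible_character_def by blast
  have rep: "is_rep G n \<rho>" using irr unfolding irreducible_rep_def by blast
  interpret R: repG G n \<rho> by unfold_locales (use E.fin_carrier rep in auto)
  have n1: "n \<noteq> 1"
  proof
    assume "n = 1"
    have "\<chi> \<one>\<^bsub>G\<^esub> = mat_trace (\<rho> \<one>\<^bsub>G\<^esub>)" using chi by simp
    also have "\<rho> \<one>\<^bsub>G\<^esub> = 1\<^sub>m n" using rep unfolding is_rep_def by blast
    finally have "\<chi> \<one>\<^bsub>G\<^esub> = 1" using \<open>n = 1\<close> mat_trace_one[of 1] by simp
    then show False using assms(4) unfolding nonlinear_character_def by simp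
  qed
  have zero: "rhat G n \<rho> (\<lambda>_. 1) = 0\<^sub>m n n" using R.rhat_const_zero[OF irr n1] .
  define X where "X = rhat G n \<rho> E.aF"
  define Y where "Y = rhat G n \<rho> E.asF"
  have Xc: "X \<in> carrier_mat n n" and Yc: "Y \<in> carrier_mat n n" unfolding X_def Y_def by simp_all
  have XX: "X * X = of_nat (s + t) \<cdot>\<^sub>m X - Y"
  proof -
    have "X * X = rhat G n \<rho> (conv G E.aF E.aF)" unfolding X_def by (rule R.rhat_mult)
    also have "\<dots> = rhat G n \<rho> (\<lambda>g. of_nat (s + t) * E.aF g + of_nat (t + 1) - E.asF g)"
      by (rule R.rhat_cong) (rule E.conv_aa)
    also have "\<dots> = of_nat (s + t) \<cdot>\<^sub>m X - Y" unfolding X_def Y_def by (rule R.rhat_lin1[OF zero])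
    finally show ?thesis .
  qed
  have YX: "Y * X = of_nat s \<cdot>\<^sub>m Y"
  proof -
    have "Y * X = rhat G n \<rho> (conv G E.asF E.aF)" unfolding X_def Y_def by (rule R.rhat_mult)
    also have "\<dots> = rhat G n \<rho> (\<lambda>g. of_nat s * E.asF g + of_nat (t * (t + 1)))"
      by (rule R.rhat_cong) (rule E.conv_sa)
    also have "\<dots> = of_nat s \<cdot>\<^sub>m Y" unfolding Y_def by (rule R.rhat_lin2[OF zero])
    finally show ?thesis .
  qed
  have ct: "(of_nat (s + t) - of_nat s :: complex) = of_nat t" by simp
  note alg = mat_alg[OF Xc Yc XX YX, unfolded ct]
  have s0: "(of_nat s :: complex) \<noteq> 0" and t0: "(of_nat t :: complex) \<noteq> 0"
    using E.s1 E.t1 by auto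
  obtain q :: nat where q: "mat_trace Y = of_nat s * of_nat t * of_nat q"
    using scaled_idem_trace[OF Yc alg(1)] s0 t0 by auto
  define Z where "Z = of_nat t \<cdot>\<^sub>m X - Y"
  have Zc: "Z \<in> carrier_mat n n" unfolding Z_def using Yc by (rule minus_carrier_mat)
  have ZZ: "Z * Z = (of_nat t * of_nat (s + t)) \<cdot>\<^sub>m Z" unfolding Z_def by (rule alg(2))
  have st0: "(of_nat t * of_nat (s + t) :: complex) \<noteq> 0"
  proof -
    have "t * (s + t) \<noteq> 0" using E.s1 E.t1 by simp
    then have "(of_nat (t * (s + t)) :: complex) \<noteq> 0" by (simp only: of_nat_eq_0_iff not_False_eq_True)
    then show ?thesis by (simp only: of_nat_mult) simp
  qed
  obtain r :: nat where r: "mat_trace Z = of_nat t * of_nat (s + t) * of_nat r"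
    using scaled_idem_trace[OF Zc ZZ st0] by auto
  have trZ: "mat_trace Z = of_nat t * mat_trace X - mat_trace Y"
    unfolding Z_def by (rule mat_trace_lin[OF Xc Yc])
  have Ek: "\<exists>k::nat. mat_trace (rhat G n \<rho> (indc (E.AA M))) = of_nat s * of_nat k" if M: "M \<in> E.Ly" for M
  proof -
    let ?E = "rhat G n \<rho> (indc (E.AA M))"
    have "?E * ?E = rhat G n \<rho> (conv G (indc (E.AA M)) (indc (E.AA M)))" by (rule R.rhat_mult)
    also have "\<dots> = rhat G n \<rho> (\<lambda>g. of_nat s * indc (E.AA M) g)"
      by (rule R.rhat_cong) (rule E.conv_AA_self[OF M])
    also have "\<dots> = of_nat s \<cdot>\<^sub>m ?E" by (rule R.rhat_smult)
    finally have "?E * ?E = of_nat s \<cdot>\<^sub>m ?E" .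
    then show ?thesis using scaled_idem_trace[of ?E n "of_nat s"] s0 by auto
  qed
  then obtain kf where kf: "\<forall>M\<in>E.Ly. mat_trace (rhat G n \<rho> (indc (E.AA M))) = of_nat s * of_nat (kf M)"
    by metis
  have trX: "mat_trace X = of_nat s * of_nat (\<Sum>M\<in>E.Ly. kf M)"
  proof -
    have "mat_trace X = (\<Sum>g\<in>carrier G. E.aF g * mat_trace (\<rho> g))" unfolding X_def by (rule R.rhat_trace)
    also have "\<dots> = (\<Sum>M\<in>E.Ly. \<Sum>g\<in>carrier G. indc (E.AA M) g * mat_trace (\<rho> g))"
      unfolding E.aF_def by (simp add: sum_distrib_right) (rule sum.swap)
    also have "\<dots> = (\<Sum>M\<in>E.Ly. mat_trace (rhat G n \<rho> (indc (E.AA M))))"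
      by (simp add: R.rhat_trace)
    also have "\<dots> = (\<Sum>M\<in>E.Ly. of_nat s * of_nat (kf M))" using kf by simp
    finally show ?thesis by (simp add: sum_distrib_left)
  qed
  define K where "K = (\<Sum>M\<in>E.Ly. kf M)"
  have termS: "complex_of_real (real c * set_elem A g + set_elem B g) = of_nat c * indc A g + indc B g" for c A B g
    by (simp add: set_elem_def indc_def)
  have termT: "complex_of_real (real c * set_elem A g - set_elem B g) = of_nat c * indc A g - indc B g" for c A B g
    by (simp add: set_elem_def indc_def)
  have elemS: "complex_of_real (elem_S Pts Lns inc s P G ap al y g) = of_nat s * E.aF g + E.asF g" for g
    unfolding elem_S_def E.aF_def E.asF_def of_real_sum termS
    by (simp add: sum.distrib sum_distrib_left)
  have elemT: "complex_of_real (elem_T Pts Lns inc t P G ap al y g) = of_nat t * E.aF g - E.asF g" for g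
    unfolding elem_T_def E.aF_def E.asF_def of_real_sum termT
    by (simp add: sum_subtractf sum_distrib_left)
  have chiS: "char_ext G \<chi> (elem_S Pts Lns inc s P G ap al y) = of_nat s * mat_trace X + mat_trace Y"
  proof -
    have "char_ext G \<chi> (elem_S Pts Lns inc s P G ap al y) = (\<Sum>g\<in>carrier G. (of_nat s * E.aF g + E.asF g) * mat_trace (\<rho> g))"
      unfolding char_ext_def using chi elemS by (intro sum.cong refl) auto
    also have "\<dots> = of_nat s * (\<Sum>g\<in>carrier G. E.aF g * mat_trace (\<rho> g)) + (\<Sum>g\<in>carrier G. E.asF g * mat_trace (\<rho> g))"
      by (simp add: algebra_simps sum.distrib sum_distrib_left)
    also have "\<dots> = of_nat s * mat_trace X + mat_trace Y" unfolding X_def Y_def by (simp add: R.rhat_trace)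
    finally show ?thesis .
  qed
  have chiT: "char_ext G \<chi> (elem_T Pts Lns inc t P G ap al y) = of_nat t * mat_trace X - mat_trace Y"
  proof -
    have "char_ext G \<chi> (elem_T Pts Lns inc t P G ap al y) = (\<Sum>g\<in>carrier G. (of_nat t * E.aF g - E.asF g) * mat_trace (\<rho> g))"
      unfolding char_ext_def using chi elemT by (intro sum.cong refl) auto
    also have "\<dots> = of_nat t * (\<Sum>g\<in>carrier G. E.aF g * mat_trace (\<rho> g)) - (\<Sum>g\<in>carrier G. E.asF g * mat_trace (\<rho> g))"
      by (simp add: algebra_simps sum_subtractf sum_distrib_left)
    also have "\<dots> = of_nat t * mat_trace X - mat_trace Y" unfolding X_def Y_def by (simp add: R.rhat_trace)
    finally show ?thesis .
  qed
  have key: "(of_nat t :: complex) * of_nat (s + t) * of_nat r = of_nat t * (of_nat s * of_nat K) - of_nat s * of_nat t * of_nat q"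
    using trZ r q trX K_def by simp
  then have "(of_nat t :: complex) * (of_nat ((s + t) * r + s * q)) = of_nat t * of_nat (s * K)"
    by (simp add: algebra_simps)
  then have "(of_nat ((s + t) * r + s * q) :: complex) = of_nat (s * K)" using t0 by simp
  then have natkey: "(s + t) * r + s * q = s * K" using of_nat_eq_iff by blast
  have part1: "char_ext G \<chi> (elem_S Pts Lns inc s P G ap al y) = of_nat (s * (s + t)) * of_nat (r + q)"
  proof -
    have "char_ext G \<chi> (elem_S Pts Lns inc s P G ap al y) = of_nat (s * (s * K) + s * t * q)"
      using chiS trX q K_def by (simp add: algebra_simps)
    also have "s * (s * K) + s * t * q = s * ((s + t) * r + s * q) + s * t * q"
      using natkey by simp
    also have "\<dots> = s * (s + t) * (r + q)" by (simp add: algebra_simps)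
    finally show ?thesis by simp
  qed
  have dvd1: "s dvd t * r"
  proof -
    have "(s + t) * r = s * K - s * q" using natkey by simp
    also have "\<dots> = s * (K - q)" by (simp add: diff_mult_distrib2)
    finally have "s dvd (s + t) * r" by simp
    then have "s dvd s * r + t * r" by (simp add: add_mult_distrib)
    then show ?thesis using dvd_add_right_iff[of s "s * r" "t * r"] by simp
  qed
  have dvd2: "s dvd gcd s t * r"
  proof -
    have "s dvd gcd (s * r) (t * r)" using dvd1 by simp
    then show ?thesis by (simp add: gcd_mult_distrib_nat[symmetric] mult.commute)
  qed
  define z where "z = gcd s t * r div s"
  have sz: "s * z = gcd s t * r" unfolding z_def using dvd2 by simp
  have g0: "(of_nat (gcd s t) :: complex) \<noteq> 0" using E.s1 by simp
  have part2: "char_ext G \<chi> (elem_T Pts Lns inc t P G ap al y) = of_nat ((s + t) * s * t) / of_nat (gcd s t) * of_nat z"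
  proof -
    have "char_ext G \<chi> (elem_T Pts Lns inc t P G ap al y) = of_nat t * of_nat (s + t) * of_nat r"
      using chiT trZ r by simp
    also have "\<dots> = of_nat ((s + t) * t * (gcd s t * r)) / of_nat (gcd s t)"
      using g0 by (simp add: field_simps)
    also have "(s + t) * t * (gcd s t * r) = (s + t) * s * t * z"
    proof -
      have "(s + t) * t * (gcd s t * r) = (s + t) * t * (s * z)" using sz by simp
      also have "\<dots> = (s + t) * s * t * z" by (simp add: algebra_simps)
      finally show ?thesis .
    qed
    finally show ?thesis by (simp add: field_simps)
  qed
  show ?thesis using part1 part2 by blast
qed

end
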